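(* For all $k,l,m,n,u,v\in\mathbb N$ and all closed terms $P:(k,l)$, $Q:(l,m)$, $R:(m,n)$, $S:(n,u)$, $T:(u,v)$: (i) $(P\mathrel{;}Q)\mathrel{;}R\sim P\mathrel{;}(Q\mathrel{;}R)$; (ii) $P\mathrel{;}\mathsf I_l\sim P\sim \mathsf I_k\mathrel{;}P$; (iii) $(P\otimes R)\otimes T\sim P\otimes(R\otimes T)$; (iv) $(P\otimes S)\mathrel{;}(Q\otimes T)\sim (P\mathrel{;}Q)\otimes(S\mathrel{;}T)$; (v) $(P\otimes R)\mathrel{;}\mathsf X_{l,n}\sim \mathsf X_{k,m}\mathrel{;}(R\otimes P)$; (vi) $\mathsf X_{k,l}\mathrel{;}\mathsf X_{l,k}\sim\mathsf I_{k+l}$. (Each equation is asserted whenever both sides are well-sorted terms.)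
   Context: Wire calculus. Fix a set $\Sigma$ of signals and $\iota\notin\Sigma$; $L=\Sigma\cup\{\iota\}$; $\vec\iota$ denotes a word of $\iota$'s. Prefix strings are words over atoms: signal variables $x$, binders $\lambda x$, $\iota$, constants $\sigma\in\Sigma$. Terms: $P::= Y \mid P\mathrel{;}P\mid P\otimes P\mid \frac{u}{v}.P\mid P+P\mid \mu Y{:}\tau.P$ ($Y$ process variables, $\tau$ a sort $(k,l)$). In $\frac{u}{v}.P$, variables $x$ with $\lambda x$ in $uv$ are bound (set $bd$). Sorting: $Y$ has its declared sort; $P:(k,n),R:(n,l)\Rightarrow P\mathrel{;}R:(k,l)$; $P:(k,l),Q:(m,n)\Rightarrow P\otimes Q:(k+m,l+n)$; $\mu Y{:}\tau'.P:\tau$ if $P:\tau$ assuming $Y{:}\tau'$; $\frac{u}{v}.P:(k,l)$ if $|u|=k,|v|=l$, free variables of $uv$ are in context and disjoint from $bd$, and $P:(k,l)$ with $bd$ added to the context; $P,Q:\tau\Rightarrow P+Q:\tau$. Closed terms only, up to renaming of bound variables; $\otimes$ binds tighter than $;$. Transitions $P\xrightarrow[\vec b]{\vec a}Q$ are generated by: (Refl) $P\xrightarrow[\vec\iota]{\vec\iota}P$; ($\iota$L) $P\xrightarrow[\vec\iota]{\vec\iota}R\xrightarrow[\vec b]{\vec a}Q$ gives $P\xrightarrow[\vec b]{\vec a}Q$; ($\iota$R) $P\xrightarrow[\vec b]{\vec a}R\xrightarrow[\vec\iota]{\vec\iota}Q$ gives $P\xrightarrow[\vec b]{\vec a}Q$;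 (Cut) $P\xrightarrow[\vec c]{\vec a}Q$, $R\xrightarrow[\vec b]{\vec c}S$ give $P\mathrel{;}R\xrightarrow[\vec b]{\vec a}Q\mathrel{;}S$; (Ten) $P\xrightarrow[\vec b]{\vec a}Q$, $R\xrightarrow[\vec d]{\vec c}S$ give $P\otimes R\xrightarrow[\vec b\vec d]{\vec a\vec c}Q\otimes S$; (Pref) for each $\sigma:bd\to L$, $\frac{u}{v}.P\xrightarrow[v|_\sigma]{u|_\sigma}P|_\sigma$ ($\lambda x\mapsto\sigma(x)$ in labels, $x\mapsto\sigma(x)$ in $P$); (Rec) $P[\mu Y.P/Y]\xrightarrow[\vec b]{\vec a}Q$ gives $\mu Y.P\xrightarrow[\vec b]{\vec a}Q$; ($+\iota$) $P\xrightarrow[\vec\iota]{\vec\iota}Q$, $R\xrightarrow[\vec\iota]{\vec\iota}S$ give $P+R\xrightarrow[\vec\iota]{\vec\iota}Q+S$; ($+$L/R) $P\xrightarrow[\vec b]{\vec a}Q$ with $\vec a\vec b$ not all $\iota$ gives $P+R\xrightarrow[\vec b]{\vec a}Q$ and $R+P\xrightarrow[\vec b]{\vec a}Q$. Bisimilarity $\sim$: $P\sim Q$ (same sort) iff some relation $S\ni(P,Q)$ satisfies: if $(P',Q')\in S$ and $P'\xrightarrow[\vec b]{\vec a}P''$ then $Q'\xrightarrow[\vec b]{\vec a}Q''$ for some $Q''$ with $(P'',Q'')\in S$, and symmetrically. Constants: $\mathsf I_k=\mu Y.\frac{\lambda x_1\cdots\lambda x_k}{\lambda x_1\cdots\lambda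 x_k}.Y:(k,k)$ and $\mathsf X_{k,l}=\mu Y.\frac{\lambda x_1\cdots\lambda x_k\lambda y_1\cdots\lambda y_l}{\lambda y_1\cdots\lambda y_l\lambda x_1\cdots\lambda x_k}.Y:(k+l,l+k)$. *)

theory Defs
  imports Main
begin

text \<open>Signals are elements of a type 'a (the set Sigma);
  the label set L = Sigma + {iota} is represented by 'a option, with None = iota.\<close>

type_synonym svar = nat
type_synonym pvar = nat
type_synonym sort = "nat \<times> nat"
type_synonym 'a lab = "'a option"

datatype 'a atom = AVar svar | ABind svar | AIota | AConst 'a

datatype 'a trm =
    PVar pvar
  | Seq "'a trm" "'a trm"
  | Ten "'a trm" "'a trm"
  | Pref "'a atom list" "'a atom list" "'a trm"
  | Plus "'a trm" "'a trm"
  | Mu pvar sort "'a trm"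

definition bd :: "'a atom list \<Rightarrow> 'a atom list \<Rightarrow> svar set" where
  "bd u v = {x. ABind x \<in> set (u @ v)}"

definition fvp :: "'a atom list \<Rightarrow> 'a atom list \<Rightarrow> svar set" where
  "fvp u v = {x. AVar x \<in> set (u @ v)}"

inductive wsort :: "(pvar \<Rightarrow> sort option) \<Rightarrow> svar set \<Rightarrow> 'a trm \<Rightarrow> sort \<Rightarrow> bool" where
  wsVar: "D Y = Some t \<Longrightarrow> wsort D G (PVar Y) t"
| wsSeq: "wsort D G P (k, n) \<Longrightarrow> wsort D G R (n, l) \<Longrightarrow> wsort D G (Seq P R) (k, l)"
| wsTen: "wsort D G P (k, l) \<Longrightarrow> wsort D G Q (m, n) \<Longrightarrow> wsort D G (Ten P Q) (k + m, l + n)"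
| wsMu: "wsort (D(Y := Some t)) G P t \<Longrightarrow> wsort D G (Mu Y t P) t"
| wsPref: "length u = k \<Longrightarrow> length v = l \<Longrightarrow> fvp u v \<subseteq> G \<Longrightarrow> fvp u v \<inter> bd u v = {}
     \<Longrightarrow> wsort D (G \<union> bd u v) P (k, l) \<Longrightarrow> wsort D G (Pref u v P) (k, l)"
| wsPlus: "wsort D G P t \<Longrightarrow> wsort D G Q t \<Longrightarrow> wsort D G (Plus P Q) t"

definition closed_sort :: "'a trm \<Rightarrow> sort \<Rightarrow> bool" where
  "closed_sort P t = wsort Map.empty {} P t"

text \<open>Substitution of a closed term for a process variable.\<close>
fun psubst :: "'a trm \<Rightarrow> pvar \<Rightarrow> 'a trm \<Rightarrow> 'a trm" where
  "psubst (PVar Z) Y R = (if Z = Y then R else PVar Z)"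
| "psubst (Seq P Q) Y R = Seq (psubst P Y R) (psubst Q Y R)"
| "psubst (Ten P Q) Y R = Ten (psubst P Y R) (psubst Q Y R)"
| "psubst (Pref u v P) Y R = Pref u v (psubst P Y R)"
| "psubst (Plus P Q) Y R = Plus (psubst P Y R) (psubst Q Y R)"
| "psubst (Mu Z t P) Y R = (if Z = Y then Mu Z t P else Mu Z t (psubst P Y R))"

fun atom_of_lab :: "'a lab \<Rightarrow> 'a atom" where
  "atom_of_lab None = AIota"
| "atom_of_lab (Some c) = AConst c"

fun satom :: "svar set \<Rightarrow> (svar \<Rightarrow> 'a lab) \<Rightarrow> 'a atom \<Rightarrow> 'a atom" where
  "satom B s (AVar x) = (if x \<in> B then atom_of_lab (s x) else AVar x)"
| "satom B s a = a"

fun ssubst :: "svar set \<Rightarrow> (svar \<Rightarrow> 'a lab) \<Rightarrow> 'a trm \<Rightarrow> 'a trm" where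
  "ssubst B s (PVar Z) = PVar Z"
| "ssubst B s (Seq P Q) = Seq (ssubst B s P) (ssubst B s Q)"
| "ssubst B s (Ten P Q) = Ten (ssubst B s P) (ssubst B s Q)"
| "ssubst B s (Pref u v P) =
     Pref (map (satom B s) u) (map (satom B s) v) (ssubst (B - bd u v) s P)"
| "ssubst B s (Plus P Q) = Plus (ssubst B s P) (ssubst B s Q)"
| "ssubst B s (Mu Z t P) = Mu Z t (ssubst B s P)"

fun lab_of :: "(svar \<Rightarrow> 'a lab) \<Rightarrow> 'a atom \<Rightarrow> 'a lab" where
  "lab_of s (ABind x) = s x"
| "lab_of s AIota = None"
| "lab_of s (AConst c) = Some c"
| "lab_of s (AVar x) = None"

definition all_iota :: "'a lab list \<Rightarrow> bool" where
  "all_iota w = (\<forall>z \<in> set w. z = None)"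

text \<open>Transitions  P --a/b--> Q  (a: upper/left label, b: lower/right label).\<close>
inductive trans :: "'a trm \<Rightarrow> 'a lab list \<Rightarrow> 'a lab list \<Rightarrow> 'a trm \<Rightarrow> bool" where
  tRefl: "closed_sort P (k, l) \<Longrightarrow> trans P (replicate k None) (replicate l None) P"
| tIotaL: "trans P a0 b0 R \<Longrightarrow> all_iota a0 \<Longrightarrow> all_iota b0 \<Longrightarrow> trans R a b Q \<Longrightarrow> trans P a b Q"
| tIotaR: "trans P a b R \<Longrightarrow> trans R a0 b0 Q \<Longrightarrow> all_iota a0 \<Longrightarrow> all_iota b0 \<Longrightarrow> trans P a b Q"
| tCut: "trans P a c Q \<Longrightarrow> trans R c b S \<Longrightarrow> trans (Seq P R) a b (Seq Q S)"
| tTen: "trans P a b Q \<Longrightarrow> trans R c d S \<Longrightarrow> trans (Ten P R) (a @ c) (b @ d) (Ten Q S)"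
| tPref: "fvp u v = {} \<Longrightarrow>
     trans (Pref u v P) (map (lab_of s) u) (map (lab_of s) v) (ssubst (bd u v) s P)"
| tRec: "trans (psubst P Y (Mu Y t P)) a b Q \<Longrightarrow> trans (Mu Y t P) a b Q"
| tPlusIota: "trans P a b Q \<Longrightarrow> all_iota a \<Longrightarrow> all_iota b \<Longrightarrow>
     trans R a b S \<Longrightarrow> trans (Plus P R) a b (Plus Q S)"
| tPlusL: "trans P a b Q \<Longrightarrow> \<not> all_iota (a @ b) \<Longrightarrow> trans (Plus P R) a b Q"
| tPlusR: "trans P a b Q \<Longrightarrow> \<not> all_iota (a @ b) \<Longrightarrow> trans (Plus R P) a b Q"

definition is_bisim :: "('a trm \<times> 'a trm) set \<Rightarrow> bool" where
  "is_bisim Rel = (\<forall>(P, Q) \<in> Rel.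
      (\<forall>a b P'. trans P a b P' \<longrightarrow> (\<exists>Q'. trans Q a b Q' \<and> (P', Q') \<in> Rel)) \<and>
      (\<forall>a b Q'. trans Q a b Q' \<longrightarrow> (\<exists>P'. trans P a b P' \<and> (P', Q') \<in> Rel)))"

definition bisimilar :: "'a trm \<Rightarrow> 'a trm \<Rightarrow> bool" (infix "\<approx>" 50) where
  "P \<approx> Q = ((\<exists>t. closed_sort P t \<and> closed_sort Q t) \<and> (\<exists>Rel. is_bisim Rel \<and> (P, Q) \<in> Rel))"

text \<open>Constants I_k and X_{k,l}; x_i are the variables 0..k-1, y_j are k..k+l-1.\<close>
definition Id_k :: "nat \<Rightarrow> 'a trm" where
  "Id_k k = Mu 0 (k, k) (Pref (map ABind [0..<k]) (map ABind [0..<k]) (PVar 0))"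

definition Tw :: "nat \<Rightarrow> nat \<Rightarrow> 'a trm" where
  "Tw k l = Mu 0 (k + l, l + k)
     (Pref (map ABind ([0..<k] @ [k..<k + l])) (map ABind ([k..<k + l] @ [0..<k])) (PVar 0))"

end

theory Submission
  imports Defs
begin


inductive_cases wsVarE: "wsort D G (PVar Y) t"
inductive_cases wsSeqE: "wsort D G (Seq P R) t"
inductive_cases wsTenE: "wsort D G (Ten P R) t"
inductive_cases wsMuE: "wsort D G (Mu Y t' P) t"
inductive_cases wsPrefE: "wsort D G (Pref u v P) t"
inductive_cases wsPlusE: "wsort D G (Plus P R) t"

lemma ws_unique: "wsort D G P t1 \<Longrightarrow> wsort D G P t2 \<Longrightarrow> t1 = t2"
proof (induction arbitrary: t2 rule: wsort.induct)
  case (wsVar D Y t G) then show ?case by (metis wsVarE option.inject)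
next
  case (wsSeq D G P k n R l) from wsSeq.prems show ?case
    by (rule wsSeqE) (metis Pair_inject wsSeq.IH)
next
  case (wsTen D G P k l Q m n) from wsTen.prems show ?case
    by (rule wsTenE) (metis Pair_inject wsTen.IH)
next
  case (wsMu D Y t G P) from wsMu.prems show ?case by (rule wsMuE) simp
next
  case (wsPref u k v l G D P) from wsPref.prems show ?case by (rule wsPrefE) (simp add: wsPref.hyps)
next
  case (wsPlus D G P t Q) from wsPlus.prems show ?case by (rule wsPlusE) (simp add: wsPlus.IH)
qed

lemma ws_weaken: "wsort D G P t \<Longrightarrow> D \<subseteq>\<^sub>m D' \<Longrightarrow> G \<subseteq> G' \<Longrightarrow> wsort D' G' P t"
proof (induction arbitrary: D' G' rule: wsort.induct)
  case (wsVar D Y t G)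
  then have "D' Y = Some t" unfolding map_le_def by (metis domI)
  then show ?case by (rule wsort.wsVar)
next
  case (wsSeq D G P k n R l) then show ?case by (intro wsort.wsSeq[of _ _ _ _ n]) auto
next
  case (wsTen D G P k l Q m n) then show ?case by (intro wsort.wsTen) auto
next
  case (wsMu D Y t G P)
  have "D(Y \<mapsto> t) \<subseteq>\<^sub>m D'(Y \<mapsto> t)" using wsMu.prems(1) by (rule map_le_upd)
  from wsMu.IH[OF this wsMu.prems(2)] show ?case by (rule wsort.wsMu)
next
  case (wsPref u k v l G D P)
  have "G \<union> bd u v \<subseteq> G' \<union> bd u v" using wsPref.prems by blast
  then have "wsort D' (G' \<union> bd u v) P (k, l)" using wsPref.prems by (intro wsPref.IH)
  then show ?case using wsPref.hyps wsPref.prems by (intro wsort.wsPref) auto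
next
  case (wsPlus D G P t Q) then show ?case by (intro wsort.wsPlus) auto
qed

lemma atom_of_lab_nv: "atom_of_lab z \<noteq> AVar x" "atom_of_lab z \<noteq> ABind x"
   "AVar x \<noteq> atom_of_lab z" "ABind x \<noteq> atom_of_lab z"
  by (cases z; simp)+

lemma mem_map_bind: "ABind x \<in> set (map (satom B s) u) \<longleftrightarrow> ABind x \<in> set u"
proof (induction u)
  case (Cons a u) then show ?case by (cases a) (auto simp: atom_of_lab_nv)
qed simp

lemma mem_map_var: "AVar x \<in> set (map (satom B s) u) \<longleftrightarrow> AVar x \<in> set u \<and> x \<notin> B"
proof (induction u)
  case (Cons a u) then show ?case by (cases a) (auto simp: atom_of_lab_nv)
qed simp

lemma bd_map: "bd (map (satom B s) u) (map (satom B s) v) = bd u v"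
  unfolding bd_def by (simp only: set_append Un_iff map_append[symmetric] mem_map_bind)

lemma fvp_map: "fvp (map (satom B s) u) (map (satom B s) v) = fvp u v - B"
  unfolding fvp_def by (auto simp only: set_append Un_iff map_append[symmetric] mem_map_var)

lemma ws_ssubst: "wsort D G0 P t \<Longrightarrow> G0 = G \<union> B \<Longrightarrow> wsort D G (ssubst B s P) t"
proof (induction arbitrary: G B rule: wsort.induct)
  case (wsVar D Y t G0) then show ?case by (simp add: wsort.wsVar)
next
  case (wsSeq D G0 P k n R l) then show ?case by (metis ssubst.simps(2) wsort.wsSeq)
next
  case (wsTen D G0 P k l Q m n) then show ?case by (metis ssubst.simps(3) wsort.wsTen)
next
  case (wsMu D Y t G0 P) then show ?case by (metis ssubst.simps(6) wsort.wsMu)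
next
  case (wsPref u k v l G0 D P)
  have "G0 \<union> bd u v = (G \<union> bd u v) \<union> (B - bd u v)" using wsPref.prems by blast
  then have "wsort D (G \<union> bd u v) (ssubst (B - bd u v) s P) (k, l)"
    by (rule wsPref.IH)
  then show ?case using wsPref.hyps wsPref.prems
    by (simp only: ssubst.simps) (rule wsort.wsPref, auto simp: bd_map fvp_map)
next
  case (wsPlus D G0 P t Q) then show ?case by (simp add: wsort.wsPlus)
qed

lemma ws_psubst: "wsort D0 G P t \<Longrightarrow> D0 = D(Y := Some t') \<Longrightarrow> closed_sort R t'
   \<Longrightarrow> wsort D G (psubst P Y R) t"
proof (induction arbitrary: D rule: wsort.induct)
  case (wsVar D0 Z t G)
  show ?case
  proof (cases "Z = Y")
    case True
    then have "t = t'" using wsVar by simp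
    then show ?thesis using True wsVar.prems ws_weaken[of Map.empty "{}" R t' D G]
      by (simp add: closed_sort_def)
  next
    case False then show ?thesis using wsVar by (simp add: wsort.wsVar)
  qed
next
  case (wsSeq D0 G P k n R' l) then show ?case by (metis psubst.simps(2) wsort.wsSeq)
next
  case (wsTen D0 G P k l Q m n) then show ?case by (metis psubst.simps(3) wsort.wsTen)
next
  case (wsMu D0 Z t G P)
  show ?case
  proof (cases "Z = Y")
    case True
    then have "D0(Z \<mapsto> t) = D(Z \<mapsto> t)" using wsMu.prems by (simp add: fun_eq_iff)
    then show ?thesis using True wsMu.hyps by (simp add: wsort.wsMu)
  next
    case False
    then have "D0(Z \<mapsto> t) = (D(Z \<mapsto> t))(Y := Some t')" using wsMu.prems by (auto simp: fun_upd_twist)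
    then have "wsort (D(Z \<mapsto> t)) G (psubst P Y R) t" using wsMu.IH wsMu.prems by blast
    then show ?thesis using False by (simp add: wsort.wsMu)
  qed
next
  case (wsPref u k v l G D0 P) then show ?case by (simp add: wsort.wsPref)
next
  case (wsPlus D0 G P t Q) then show ?case by (metis psubst.simps(5) wsort.wsPlus)
qed

lemma cs_Seq: "closed_sort (Seq P R) t \<longleftrightarrow> (\<exists>k n l. t = (k, l) \<and> closed_sort P (k, n) \<and> closed_sort R (n, l))"
  unfolding closed_sort_def
proof
  assume "wsort Map.empty {} (Seq P R) t" then show "\<exists>k n l. t = (k, l) \<and> wsort Map.empty {} P (k, n) \<and> wsort Map.empty {} R (n, l)"
    by (rule wsSeqE) blast
qed (auto intro: wsort.wsSeq)

lemma cs_Ten: "closed_sort (Ten P R) t \<longleftrightarrow> (\<exists>k l m n. t = (k + m, l + n) \<and> closed_sort P (k, l) \<and> closed_sort R (m, n))"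
  unfolding closed_sort_def
proof
  assume "wsort Map.empty {} (Ten P R) t" then show "\<exists>k l m n. t = (k + m, l + n) \<and> wsort Map.empty {} P (k, l) \<and> wsort Map.empty {} R (m, n)"
    by (rule wsTenE) blast
qed (auto intro: wsort.wsTen)

lemma cs_unique: "closed_sort P t1 \<Longrightarrow> closed_sort P t2 \<Longrightarrow> t1 = t2"
  unfolding closed_sort_def by (rule ws_unique)

lemma sr: "trans P a b P' \<Longrightarrow> closed_sort P t \<Longrightarrow> closed_sort P' t \<and> length a = fst t \<and> length b = snd t"
proof (induction arbitrary: t rule: trans.induct)
  case (tRefl P k l)
  then have "t = (k, l)" using cs_unique by blast
  then show ?case using tRefl by simp
next
  case (tIotaL P a0 b0 R a b Q)
  from tIotaL.IH(1)[OF tIotaL.prems] have "closed_sort R t" by simp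
  from tIotaL.IH(2)[OF this] show ?case .
next
  case (tIotaR P a b R a0 b0 Q)
  from tIotaR.IH(1)[OF tIotaR.prems] have 1: "closed_sort R t" "length a = fst t \<and> length b = snd t" by simp_all
  from tIotaR.IH(2)[OF 1(1)] 1(2) show ?case by simp
next
  case (tCut P a c Q R b S)
  then obtain k n l where t: "t = (k, l)" and c: "closed_sort P (k, n)" "closed_sort R (n, l)" by (auto simp: cs_Seq)
  from tCut.IH(1)[OF c(1)] tCut.IH(2)[OF c(2)] t show ?case by (auto simp: cs_Seq)
next
  case (tTen P a b Q R c d S)
  then obtain k l m n where t: "t = (k + m, l + n)" and c: "closed_sort P (k, l)" "closed_sort R (m, n)" by (auto simp: cs_Ten)
  from tTen.IH(1)[OF c(1)] tTen.IH(2)[OF c(2)] t show ?case by (auto simp: cs_Ten)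
next
  case (tPref u v P s)
  from tPref.prems have "t = (length u, length v)" "wsort Map.empty ({} \<union> bd u v) P t"
    unfolding closed_sort_def by (auto elim: wsPrefE)
  then show ?case unfolding closed_sort_def by (auto intro: ws_ssubst)
next
  case (tRec P Y t' a b Q)
  from tRec.prems have "t = t'" and w: "wsort (Map.empty(Y \<mapsto> t')) {} P t'"
    unfolding closed_sort_def by (auto elim: wsMuE)
  have "wsort Map.empty {} (psubst P Y (Mu Y t' P)) t'"
    using ws_psubst[OF w refl] tRec.prems \<open>t = t'\<close> by blast
  then have "closed_sort (psubst P Y (Mu Y t' P)) t" using \<open>t = t'\<close> unfolding closed_sort_def by simp
  then show ?case by (rule tRec.IH)
next
  case (tPlusIota P a b Q R S)
  then have c: "closed_sort P t" "closed_sort R t" unfolding closed_sort_def by (auto elim: wsPlusE)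
  from tPlusIota.IH(1)[OF c(1)] tPlusIota.IH(2)[OF c(2)] show ?case unfolding closed_sort_def by (auto intro: wsort.wsPlus)
next
  case (tPlusL P a b Q R)
  then have c: "closed_sort P t" unfolding closed_sort_def by (auto elim: wsPlusE)
  from tPlusL.IH[OF c] show ?case .
next
  case (tPlusR P a b Q R)
  then have c: "closed_sort P t" unfolding closed_sort_def by (auto elim: wsPlusE)
  from tPlusR.IH[OF c] show ?case .
qed



lemma all_iota_repl: "all_iota w \<Longrightarrow> w = replicate (length w) None"
  unfolding all_iota_def by (induction w) auto

lemma all_iota_replicate[simp]: "all_iota (replicate n None)"
  unfolding all_iota_def by simp

lemma all_iota_append[simp]: "all_iota (a @ b) \<longleftrightarrow> all_iota a \<and> all_iota b"
  unfolding all_iota_def by auto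

lemma trefl: "closed_sort P (k, l) \<Longrightarrow> trans P (replicate k None) (replicate l None) P"
  by (rule tRefl)

lemma tenD: "trans X a b Z \<Longrightarrow> X = Ten P R \<Longrightarrow> closed_sort P (k, l) \<Longrightarrow> closed_sort R (m, n) \<Longrightarrow>
  \<exists>a1 a2 b1 b2 P' R'. a = a1 @ a2 \<and> b = b1 @ b2 \<and> Z = Ten P' R' \<and> trans P a1 b1 P' \<and> trans R a2 b2 R'"
proof (induction arbitrary: P R rule: trans.induct)
  case (tRefl X k0 l0)
  have "closed_sort (Ten P R) (k + m, l + n)" using tRefl.prems by (auto simp: cs_Ten)
  then have "(k0, l0) = (k + m, l + n)" using tRefl cs_unique by blast
  then have e: "k0 = k + m" "l0 = l + n" by simp_all
  show ?case
    apply (rule exI[of _ "replicate k None"], rule exI[of _ "replicate m None"])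
    apply (rule exI[of _ "replicate l None"], rule exI[of _ "replicate n None"])
    apply (rule exI[of _ P], rule exI[of _ R])
    using tRefl.prems trefl[OF tRefl.prems(2)] trefl[OF tRefl.prems(3)] e by (simp add: replicate_add)
next
  case (tIotaL X a0 b0 Y a b Q)
  obtain a01 a02 b01 b02 P1 R1 where
    1: "a0 = a01 @ a02" "b0 = b01 @ b02" "Y = Ten P1 R1" "trans P a01 b01 P1" "trans R a02 b02 R1"
    using tIotaL.IH(1)[OF tIotaL.prems] by blast
  have c: "closed_sort P1 (k, l)" "closed_sort R1 (m, n)"
    using sr[OF 1(4) tIotaL.prems(2)] sr[OF 1(5) tIotaL.prems(3)] by simp_all
  obtain a1 a2 b1 b2 P' R' where
    2: "a = a1 @ a2" "b = b1 @ b2" "Q = Ten P' R'" "trans P1 a1 b1 P'" "trans R1 a2 b2 R'"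
    using tIotaL.IH(2)[OF 1(3) c] by blast
  have i: "all_iota a01" "all_iota a02" "all_iota b01" "all_iota b02"
    using tIotaL.hyps(2,3) 1(1,2) by simp_all
  have "trans P a1 b1 P'" using 1(4) i(1,3) 2(4) by (rule trans.tIotaL)
  moreover have "trans R a2 b2 R'" using 1(5) i(2,4) 2(5) by (rule trans.tIotaL)
  ultimately show ?case using 2(1,2,3) by blast
next
  case (tIotaR X a b Y a0 b0 Q)
  obtain a1 a2 b1 b2 P1 R1 where
    1: "a = a1 @ a2" "b = b1 @ b2" "Y = Ten P1 R1" "trans P a1 b1 P1" "trans R a2 b2 R1"
    using tIotaR.IH(1)[OF tIotaR.prems] by blast
  have c: "closed_sort P1 (k, l)" "closed_sort R1 (m, n)"
    using sr[OF 1(4) tIotaR.prems(2)] sr[OF 1(5) tIotaR.prems(3)] by simp_all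
  obtain a01 a02 b01 b02 P' R' where
    2: "a0 = a01 @ a02" "b0 = b01 @ b02" "Q = Ten P' R'" "trans P1 a01 b01 P'" "trans R1 a02 b02 R'"
    using tIotaR.IH(2)[OF 1(3) c] by blast
  have i: "all_iota a01" "all_iota a02" "all_iota b01" "all_iota b02"
    using tIotaR.hyps(3,4) 2(1,2) by simp_all
  have "trans P a1 b1 P'" using 1(4) 2(4) i(1,3) by (rule trans.tIotaR)
  moreover have "trans R a2 b2 R'" using 1(5) 2(5) i(2,4) by (rule trans.tIotaR)
  ultimately show ?case using 1(1,2) 2(3) by blast
next
  case (tTen P0 a b Q R0 c d S) then show ?case
    by (intro exI[of _ a] exI[of _ c] exI[of _ b] exI[of _ d] exI[of _ Q] exI[of _ S]) auto
qed simp_all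

definition stepT :: "'a trm \<Rightarrow> 'a lab list \<Rightarrow> 'a lab list \<Rightarrow> 'a trm \<Rightarrow> bool" where
  "stepT X a b X' \<longleftrightarrow> (\<exists>k l. closed_sort X (k, l) \<and> a = replicate k None \<and> b = replicate l None \<and> X' = X)
    \<or> (\<exists>P R c Q S. X = Seq P R \<and> X' = Seq Q S \<and> trans P a c Q \<and> trans R c b S)
    \<or> (\<exists>P R Q S a1 a2 b1 b2. X = Ten P R \<and> X' = Ten Q S \<and> a = a1 @ a2 \<and> b = b1 @ b2
         \<and> trans P a1 b1 Q \<and> trans R a2 b2 S)"

lemma gen:
  assumes dom: "\<And>X Y. (X, Y) \<in> Rel \<Longrightarrow> (\<exists>P R. X = Seq P R \<or> X = Ten P R)"
    and H: "\<And>X Y a b X'. (X, Y) \<in> Rel \<Longrightarrow> stepT X a b X' \<Longrightarrow> \<exists>Y'. trans Y a b Y' \<and> (X', Y') \<in> Rel"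
  shows "trans X a b X' \<Longrightarrow> (X, Y) \<in> Rel \<Longrightarrow> \<exists>Y'. trans Y a b Y' \<and> (X', Y') \<in> Rel"
proof (induction arbitrary: Y rule: trans.induct)
  case (tRefl P k l)
  have "stepT P (replicate k None) (replicate l None) P" unfolding stepT_def using tRefl.hyps by blast
  then show ?case by (rule H[OF tRefl.prems])
next
  case (tIotaL P a0 b0 R a b Q)
  from tIotaL.IH(1)[OF tIotaL.prems] obtain Y1 where 1: "trans Y a0 b0 Y1" "(R, Y1) \<in> Rel" by blast
  from tIotaL.IH(2)[OF 1(2)] obtain Y' where 2: "trans Y1 a b Y'" "(Q, Y') \<in> Rel" by blast
  have "trans Y a b Y'" using 1(1) tIotaL.hyps(2,3) 2(1) by (rule trans.tIotaL)
  then show ?case using 2(2) by blast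
next
  case (tIotaR P a b R a0 b0 Q)
  from tIotaR.IH(1)[OF tIotaR.prems] obtain Y1 where 1: "trans Y a b Y1" "(R, Y1) \<in> Rel" by blast
  from tIotaR.IH(2)[OF 1(2)] obtain Y' where 2: "trans Y1 a0 b0 Y'" "(Q, Y') \<in> Rel" by blast
  have "trans Y a b Y'" using 1(1) 2(1) tIotaR.hyps(3,4) by (rule trans.tIotaR)
  then show ?case using 2(2) by blast
next
  case (tCut P a c Q R b S)
  have "stepT (Seq P R) a b (Seq Q S)" unfolding stepT_def using tCut.hyps by blast
  then show ?case by (rule H[OF tCut.prems])
next
  case (tTen P a b Q R c d S)
  have "stepT (Ten P R) (a @ c) (b @ d) (Ten Q S)" unfolding stepT_def using tTen.hyps by blast
  then show ?case by (rule H[OF tTen.prems])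
next
  case (tPref u v P s) show ?case using dom[OF tPref.prems] by auto
next
  case (tRec P Y' t a b Q) show ?case using dom[OF tRec.prems] by auto
next
  case (tPlusIota P a b Q R S) show ?case using dom[OF tPlusIota.prems] by auto
next
  case (tPlusL P a b Q R) show ?case using dom[OF tPlusL.prems] by auto
next
  case (tPlusR P a b Q R) show ?case using dom[OF tPlusR.prems] by auto
qed

lemma bisimI:
  assumes "\<And>X Y a b X'. (X, Y) \<in> Rel \<Longrightarrow> trans X a b X' \<Longrightarrow> \<exists>Y'. trans Y a b Y' \<and> (X', Y') \<in> Rel"
    and "\<And>X Y a b Y'. (X, Y) \<in> Rel \<Longrightarrow> trans Y a b Y' \<Longrightarrow> \<exists>X'. trans X a b X' \<and> (X', Y') \<in> Rel"
  shows "is_bisim Rel"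
  using assms unfolding is_bisim_def by blast

definition Wire :: "nat list \<Rightarrow> nat list \<Rightarrow> sort \<Rightarrow> 'a trm" where
  "Wire xs ys t = Mu 0 t (Pref (map ABind xs) (map ABind ys) (PVar 0))"

definition WireU :: "nat list \<Rightarrow> nat list \<Rightarrow> sort \<Rightarrow> 'a trm" where
  "WireU xs ys t = Pref (map ABind xs) (map ABind ys) (Wire xs ys t)"

lemma fvp_binds[simp]: "fvp (map ABind xs) (map ABind ys) = {}"
  unfolding fvp_def by auto

lemma ssubst_Wire[simp]: "ssubst B s (Wire xs ys t) = Wire xs ys t"
  unfolding Wire_def by (simp add: comp_def)

lemma psubst_Wire: "psubst (Pref (map ABind xs) (map ABind ys) (PVar 0)) 0 (Wire xs ys t) = WireU xs ys t"
  unfolding WireU_def by simp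

lemma cs_Wire: "t = (length xs, length ys) \<Longrightarrow> closed_sort (Wire xs ys t) t"
proof -
  assume t: "t = (length xs, length ys)"
  have "wsort (Map.empty(0 \<mapsto> t)) ({} \<union> bd (map ABind xs) (map ABind ys)) (PVar 0) (length (map ABind xs), length (map ABind ys))"
    using t by (intro wsort.wsVar) simp
  then have "wsort (Map.empty(0 \<mapsto> t)) {} (Pref (map ABind xs) (map ABind ys) (PVar 0)) (length (map ABind xs), length (map ABind ys))"
    by (intro wsort.wsPref) auto
  then have "wsort (Map.empty(0 \<mapsto> t)) {} (Pref (map ABind xs) (map ABind ys) (PVar 0)) t" using t by simp
  then show ?thesis unfolding closed_sort_def Wire_def by (rule wsort.wsMu)
qed

lemma cs_WireU: "t = (length xs, length ys) \<Longrightarrow> closed_sort (WireU xs ys t) t"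
proof -
  assume t: "t = (length xs, length ys)"
  have "wsort Map.empty ({} \<union> bd (map ABind xs) (map ABind ys)) (Wire xs ys t) t"
    using cs_Wire[OF t] unfolding closed_sort_def by (rule ws_weaken) auto
  then have "wsort Map.empty ({} \<union> bd (map ABind xs) (map ABind ys)) (Wire xs ys t) (length (map ABind xs), length (map ABind ys))"
    using t by simp
  then have "wsort Map.empty {} (Pref (map ABind xs) (map ABind ys) (Wire xs ys t)) (length (map ABind xs), length (map ABind ys))"
    by (intro wsort.wsPref) auto
  then show ?thesis unfolding closed_sort_def WireU_def using t by simp
qed

lemma lab_ABind_comp[simp]: "lab_of s \<circ> ABind = s"
  by (rule ext) simp

lemma map_lab_ABind[simp]: "map (lab_of s) (map ABind xs) = map s xs"
  by (induction xs) auto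

lemma wireU_step: "trans (WireU xs ys t) (map s xs) (map s ys) (Wire xs ys t)"
  using tPref[of "map ABind xs" "map ABind ys" "Wire xs ys t" s] unfolding WireU_def by simp

lemma wire_step: "trans (Wire xs ys t) (map s xs) (map s ys) (Wire xs ys t)"
proof -
  have "trans (psubst (Pref (map ABind xs) (map ABind ys) (PVar 0)) 0 (Mu 0 t (Pref (map ABind xs) (map ABind ys) (PVar 0)))) (map s xs) (map s ys) (Wire xs ys t)"
    using wireU_step[of xs ys t s] unfolding WireU_def Wire_def by simp
  then show ?thesis unfolding Wire_def by (rule tRec)
qed

lemma wire_inv: "trans X a b Y \<Longrightarrow> X = Wire xs ys t \<or> X = WireU xs ys t \<Longrightarrow> t = (length xs, length ys) \<Longrightarrow>
   (Y = Wire xs ys t \<or> Y = WireU xs ys t) \<and> (\<exists>s. a = map s xs \<and> b = map s ys)"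
proof (induction rule: trans.induct)
  case (tRefl P k l)
  have "closed_sort P t" using tRefl.prems(1) cs_Wire[OF tRefl.prems(2)] cs_WireU[OF tRefl.prems(2)] by auto
  then have "(k, l) = t" using tRefl.hyps cs_unique by blast
  then have "replicate k None = map (\<lambda>_. None) xs \<and> replicate l None = map (\<lambda>_. None) ys"
    using tRefl.prems by (simp add: map_replicate_const)
  then show ?case using tRefl.prems by blast
next
  case (tIotaL P a0 b0 R a b Q) then show ?case by blast
next
  case (tIotaR P a b R a0 b0 Q) then show ?case by blast
next
  case (tPref u v P s)
  then have "u = map ABind xs" "v = map ABind ys" "P = Wire xs ys t"
    unfolding Wire_def WireU_def by auto
  then show ?case by auto
next
  case (tRec P Y' t' a b Q)
  then have "Y' = 0" "t' = t" "P = Pref (map ABind xs) (map ABind ys) (PVar 0)"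
    unfolding Wire_def WireU_def by auto
  then have "psubst P Y' (Mu Y' t' P) = WireU xs ys t" using psubst_Wire[of xs ys t]
    unfolding Wire_def by simp
  then show ?case using tRec by simp
qed (auto simp: Wire_def WireU_def)

lemma ex_map_upt: "length a = n \<Longrightarrow> \<exists>s. map s [0..<n] = a"
  by (metis map_nth)

lemma upt_split: "[0..<k] @ [k..<k + l] = [0..<k + l]"
  by (simp add: upt_add_eq_append[symmetric])

lemma Id_Wire: "Id_k k = Wire [0..<k] [0..<k] (k, k)"
  unfolding Id_k_def Wire_def by simp

lemma Tw_Wire: "Tw k l = Wire ([0..<k] @ [k..<k + l]) ([k..<k + l] @ [0..<k]) (k + l, l + k)"
  unfolding Tw_def Wire_def by simp

lemma tw_lab: "map s ([k..<k + l] @ [0..<k]) = drop k (map s ([0..<k] @ [k..<k + l])) @ take k (map s ([0..<k] @ [k..<k + l]))"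
  by simp



lemma iota_len: "all_iota w \<Longrightarrow> length w = n \<Longrightarrow> w = replicate n None"
  using all_iota_repl by blast

lemma assocA: "trans X0 a c X1 \<Longrightarrow> X0 = Seq P Q \<Longrightarrow> closed_sort (Seq P Q) (k, m) \<Longrightarrow> closed_sort R (m, n)
  \<Longrightarrow> trans R c b S \<Longrightarrow> \<exists>P' Q'. X1 = Seq P' Q' \<and> trans (Seq P (Seq Q R)) a b (Seq P' (Seq Q' S))"
proof (induction arbitrary: P Q R b S rule: trans.induct)
  case (tRefl X k0 m0)
  have "(k0, m0) = (k, m)" using tRefl.hyps tRefl.prems(1,2) cs_unique by blast
  then have e: "k0 = k" "m0 = m" by simp_all
  obtain l' where c: "closed_sort P (k, l')" "closed_sort Q (l', m)" using tRefl.prems(2) by (auto simp: cs_Seq)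
  have "trans (Seq Q R) (replicate l' None) b (Seq Q S)"
    using trefl[OF c(2)] tRefl.prems(4) e by (intro tCut) simp_all
  then have "trans (Seq P (Seq Q R)) (replicate k None) b (Seq P (Seq Q S))"
    by (rule tCut[OF trefl[OF c(1)]])
  then show ?case using tRefl.prems(1) e by simp
next
  case (tIotaL X0 a0 c0 Y a c X1)
  have "length c0 = m" using sr[OF tIotaL.hyps(1)] tIotaL.prems(1,2) by simp
  then have c0: "c0 = replicate m None" using tIotaL.hyps(3) iota_len by blast
  have rR: "trans R c0 (replicate n None) R" using trefl[OF tIotaL.prems(3)] c0 by simp
  obtain P1 Q1 where 1: "Y = Seq P1 Q1" "trans (Seq P (Seq Q R)) a0 (replicate n None) (Seq P1 (Seq Q1 R))"
    using tIotaL.IH(1)[OF tIotaL.prems(1,2,3) rR] by blast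
  have cY: "closed_sort (Seq P1 Q1) (k, m)" using sr[OF tIotaL.hyps(1)] tIotaL.prems(1,2) 1(1) by simp
  obtain P' Q' where 2: "X1 = Seq P' Q'" "trans (Seq P1 (Seq Q1 R)) a b (Seq P' (Seq Q' S))"
    using tIotaL.IH(2)[OF 1(1) cY tIotaL.prems(3,4)] by blast
  have "trans (Seq P (Seq Q R)) a b (Seq P' (Seq Q' S))"
    using 1(2) tIotaL.hyps(2) all_iota_replicate 2(2) by (rule trans.tIotaL)
  then show ?case using 2(1) by blast
next
  case (tIotaR X0 a c Y a0 c0 X1)
  obtain P1 Q1 where 1: "Y = Seq P1 Q1" "trans (Seq P (Seq Q R)) a b (Seq P1 (Seq Q1 S))"
    using tIotaR.IH(1)[OF tIotaR.prems] by blast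
  have cY: "closed_sort (Seq P1 Q1) (k, m)" using sr[OF tIotaR.hyps(1)] tIotaR.prems(1,2) 1(1) by simp
  have cS: "closed_sort S (m, n)" using sr[OF tIotaR.prems(4,3)] by simp
  have "length c0 = m" using sr[OF tIotaR.hyps(2)] cY 1(1) by simp
  then have c0: "c0 = replicate m None" using tIotaR.hyps(4) iota_len by blast
  have rS: "trans S c0 (replicate n None) S" using trefl[OF cS] c0 by simp
  obtain P' Q' where 2: "X1 = Seq P' Q'" "trans (Seq P1 (Seq Q1 S)) a0 (replicate n None) (Seq P' (Seq Q' S))"
    using tIotaR.IH(2)[OF 1(1) cY cS rS] by blast
  have "trans (Seq P (Seq Q R)) a b (Seq P' (Seq Q' S))"
    using 1(2) 2(2) tIotaR.hyps(3) all_iota_replicate by (rule trans.tIotaR)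
  then show ?case using 2(1) by blast
next
  case (tCut P0 a d P' Q0 c Q')
  from tCut.prems(1) have e: "P0 = P" "Q0 = Q" by simp_all
  have 1: "trans (Seq Q R) d b (Seq Q' S)" using trans.tCut[OF tCut.hyps(2) tCut.prems(4)] e by simp
  have "trans (Seq P (Seq Q R)) a b (Seq P' (Seq Q' S))" using trans.tCut[OF tCut.hyps(1) 1] e by simp
  then show ?case by blast
qed simp_all

lemma assocB: "trans X0 c b X2 \<Longrightarrow> X0 = Seq Q R \<Longrightarrow> closed_sort P (k, l) \<Longrightarrow> closed_sort (Seq Q R) (l, n)
  \<Longrightarrow> trans P a c P' \<Longrightarrow> \<exists>Q' R'. X2 = Seq Q' R' \<and> trans (Seq (Seq P Q) R) a b (Seq (Seq P' Q') R')"
proof (induction arbitrary: P Q R a P' rule: trans.induct)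
  case (tRefl X l0 n0)
  have "(l0, n0) = (l, n)" using tRefl.hyps tRefl.prems(1,3) cs_unique by blast
  then have e: "l0 = l" "n0 = n" by simp_all
  obtain m' where c: "closed_sort Q (l, m')" "closed_sort R (m', n)" using tRefl.prems(3) by (auto simp: cs_Seq)
  have "trans (Seq P Q) a (replicate m' None) (Seq P' Q)"
    using tRefl.prems(4) trefl[OF c(1)] e by (intro tCut) simp_all
  then have "trans (Seq (Seq P Q) R) a (replicate n None) (Seq (Seq P' Q) R)"
    by (rule tCut[OF _ trefl[OF c(2)]])
  then show ?case using tRefl.prems(1) e by simp
next
  case (tIotaL X0 c0 b0 Y c b X2)
  have "length c0 = l" using sr[OF tIotaL.hyps(1)] tIotaL.prems(1,3) by simp
  then have c0: "c0 = replicate l None" using tIotaL.hyps(2) iota_len by blast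
  have rP: "trans P (replicate k None) c0 P" using trefl[OF tIotaL.prems(2)] c0 by simp
  obtain Q1 R1 where 1: "Y = Seq Q1 R1" "trans (Seq (Seq P Q) R) (replicate k None) b0 (Seq (Seq P Q1) R1)"
    using tIotaL.IH(1)[OF tIotaL.prems(1,2,3) rP] by blast
  have cY: "closed_sort (Seq Q1 R1) (l, n)" using sr[OF tIotaL.hyps(1)] tIotaL.prems(1,3) 1(1) by simp
  obtain Q' R' where 2: "X2 = Seq Q' R'" "trans (Seq (Seq P Q1) R1) a b (Seq (Seq P' Q') R')"
    using tIotaL.IH(2)[OF 1(1) tIotaL.prems(2) cY tIotaL.prems(4)] by blast
  have "trans (Seq (Seq P Q) R) a b (Seq (Seq P' Q') R')"
    using 1(2) all_iota_replicate tIotaL.hyps(3) 2(2) by (rule trans.tIotaL)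
  then show ?case using 2(1) by blast
next
  case (tIotaR X0 c b Y c0 b0 X2)
  obtain Q1 R1 where 1: "Y = Seq Q1 R1" "trans (Seq (Seq P Q) R) a b (Seq (Seq P' Q1) R1)"
    using tIotaR.IH(1)[OF tIotaR.prems] by blast
  have cY: "closed_sort (Seq Q1 R1) (l, n)" using sr[OF tIotaR.hyps(1)] tIotaR.prems(1,3) 1(1) by simp
  have cP: "closed_sort P' (k, l)" using sr[OF tIotaR.prems(4,2)] by simp
  have "length c0 = l" using sr[OF tIotaR.hyps(2)] cY 1(1) by simp
  then have c0: "c0 = replicate l None" using tIotaR.hyps(3) iota_len by blast
  have rP: "trans P' (replicate k None) c0 P'" using trefl[OF cP] c0 by simp
  obtain Q' R' where 2: "X2 = Seq Q' R'" "trans (Seq (Seq P' Q1) R1) (replicate k None) b0 (Seq (Seq P' Q') R')"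
    using tIotaR.IH(2)[OF 1(1) cP cY rP] by blast
  have "trans (Seq (Seq P Q) R) a b (Seq (Seq P' Q') R')"
    using 1(2) 2(2) all_iota_replicate tIotaR.hyps(4) by (rule trans.tIotaR)
  then show ?case using 2(1) by blast
next
  case (tCut Q0 c d Q' R0 b R')
  from tCut.prems(1) have e: "Q0 = Q" "R0 = R" by simp_all
  have 1: "trans (Seq P Q) a d (Seq P' Q')" using trans.tCut[OF tCut.prems(4) tCut.hyps(1)] e by simp
  have "trans (Seq (Seq P Q) R) a b (Seq (Seq P' Q') R')" using trans.tCut[OF 1 tCut.hyps(2)] e by simp
  then show ?case by blast
qed simp_all

lemma interB2: "trans X0 a2 b2 Z2 \<Longrightarrow> X0 = Seq S T \<Longrightarrow> closed_sort (Seq S T) (n, v)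
  \<Longrightarrow> closed_sort P (k, l) \<Longrightarrow> closed_sort Q (l, m) \<Longrightarrow> trans P a1 c P' \<Longrightarrow> trans Q c b1 Q'
  \<Longrightarrow> \<exists>S' T'. Z2 = Seq S' T' \<and> trans (Seq (Ten P S) (Ten Q T)) (a1 @ a2) (b1 @ b2) (Seq (Ten P' S') (Ten Q' T'))"
proof (induction arbitrary: S T P Q a1 c b1 P' Q' rule: trans.induct)
  case (tRefl X n0 v0)
  have "(n0, v0) = (n, v)" using tRefl.hyps tRefl.prems(1,2) cs_unique by blast
  then have e: "n0 = n" "v0 = v" by simp_all
  obtain u' where c: "closed_sort S (n, u')" "closed_sort T (u', v)" using tRefl.prems(2) by (auto simp: cs_Seq)
  have 1: "trans (Ten P S) (a1 @ replicate n None) (c @ replicate u' None) (Ten P' S)"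
    by (rule tTen[OF tRefl.prems(5) trefl[OF c(1)]])
  have 2: "trans (Ten Q T) (c @ replicate u' None) (b1 @ replicate v None) (Ten Q' T)"
    by (rule tTen[OF tRefl.prems(6) trefl[OF c(2)]])
  have "trans (Seq (Ten P S) (Ten Q T)) (a1 @ replicate n None) (b1 @ replicate v None) (Seq (Ten P' S) (Ten Q' T))"
    by (rule tCut[OF 1 2])
  then show ?case using tRefl.prems(1) e by simp
next
  case (tIotaL X0 a0 b0 Y a2 b2 Z2)
  obtain S1 T1 where 1: "Y = Seq S1 T1"
    "trans (Seq (Ten P S) (Ten Q T)) (replicate k None @ a0) (replicate m None @ b0) (Seq (Ten P S1) (Ten Q T1))"
    using tIotaL.IH(1)[OF tIotaL.prems(1,2,3,4) trefl[OF tIotaL.prems(3)] trefl[OF tIotaL.prems(4)]] by blast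
  have cY: "closed_sort (Seq S1 T1) (n, v)" using sr[OF tIotaL.hyps(1)] tIotaL.prems(1,2) 1(1) by simp
  obtain S' T' where 2: "Z2 = Seq S' T'"
    "trans (Seq (Ten P S1) (Ten Q T1)) (a1 @ a2) (b1 @ b2) (Seq (Ten P' S') (Ten Q' T'))"
    using tIotaL.IH(2)[OF 1(1) cY tIotaL.prems(3,4,5,6)] by blast
  have "all_iota (replicate k None @ a0)" "all_iota (replicate m None @ b0)" using tIotaL.hyps(2,3) by simp_all
  from trans.tIotaL[OF 1(2) this 2(2)] show ?case using 2(1) by blast
next
  case (tIotaR X0 a2 b2 Y a0 b0 Z2)
  obtain S1 T1 where 1: "Y = Seq S1 T1"
    "trans (Seq (Ten P S) (Ten Q T)) (a1 @ a2) (b1 @ b2) (Seq (Ten P' S1) (Ten Q' T1))"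
    using tIotaR.IH(1)[OF tIotaR.prems] by blast
  have cY: "closed_sort (Seq S1 T1) (n, v)" using sr[OF tIotaR.hyps(1)] tIotaR.prems(1,2) 1(1) by simp
  have cP: "closed_sort P' (k, l)" using sr[OF tIotaR.prems(5,3)] by simp
  have cQ: "closed_sort Q' (l, m)" using sr[OF tIotaR.prems(6,4)] by simp
  obtain S' T' where 2: "Z2 = Seq S' T'"
    "trans (Seq (Ten P' S1) (Ten Q' T1)) (replicate k None @ a0) (replicate m None @ b0) (Seq (Ten P' S') (Ten Q' T'))"
    using tIotaR.IH(2)[OF 1(1) cY cP cQ trefl[OF cP] trefl[OF cQ]] by blast
  have "all_iota (replicate k None @ a0)" "all_iota (replicate m None @ b0)" using tIotaR.hyps(3,4) by simp_all
  from trans.tIotaR[OF 1(2) 2(2) this] show ?case using 2(1) by blast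
next
  case (tCut S0 a2 d S' T0 b2 T')
  from tCut.prems(1) have e: "S0 = S" "T0 = T" by simp_all
  have 1: "trans (Ten P S) (a1 @ a2) (c @ d) (Ten P' S')" using tTen[OF tCut.prems(5) tCut.hyps(1)] e by simp
  have 2: "trans (Ten Q T) (c @ d) (b1 @ b2) (Ten Q' T')" using tTen[OF tCut.prems(6) tCut.hyps(2)] e by simp
  from trans.tCut[OF 1 2] show ?case by blast
qed simp_all

lemma interB1: "trans X0 a1 b1 Z1 \<Longrightarrow> X0 = Seq P Q \<Longrightarrow> closed_sort (Seq P Q) (k, m)
  \<Longrightarrow> closed_sort (Seq S T) (n, v) \<Longrightarrow> trans (Seq S T) a2 b2 Z2
  \<Longrightarrow> \<exists>P' Q' S' T'. Z1 = Seq P' Q' \<and> Z2 = Seq S' T' \<and>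
        trans (Seq (Ten P S) (Ten Q T)) (a1 @ a2) (b1 @ b2) (Seq (Ten P' S') (Ten Q' T'))"
proof (induction arbitrary: P Q S T a2 b2 Z2 rule: trans.induct)
  case (tRefl X k0 m0)
  have "(k0, m0) = (k, m)" using tRefl.hyps tRefl.prems(1,2) cs_unique by blast
  then have e: "k0 = k" "m0 = m" by simp_all
  obtain l' where c: "closed_sort P (k, l')" "closed_sort Q (l', m)" using tRefl.prems(2) by (auto simp: cs_Seq)
  obtain S' T' where "Z2 = Seq S' T'" "trans (Seq (Ten P S) (Ten Q T)) (replicate k None @ a2) (replicate m None @ b2) (Seq (Ten P S') (Ten Q T'))"
    using interB2[OF tRefl.prems(4) refl tRefl.prems(3) c trefl[OF c(1)] trefl[OF c(2)]] by blast
  then show ?case using tRefl.prems(1) e by blast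
next
  case (tIotaL X0 a0 b0 Y a1 b1 Z1)
  have cST: "closed_sort (Seq S T) (n, v)" by (rule tIotaL.prems(3))
  obtain P1 Q1 S0 T0 where 1: "Y = Seq P1 Q1" "Seq S T = Seq S0 T0"
    "trans (Seq (Ten P S) (Ten Q T)) (a0 @ replicate n None) (b0 @ replicate v None) (Seq (Ten P1 S0) (Ten Q1 T0))"
    using tIotaL.IH(1)[OF tIotaL.prems(1,2,3) trefl[OF cST]] by blast
  have cY: "closed_sort (Seq P1 Q1) (k, m)" using sr[OF tIotaL.hyps(1)] tIotaL.prems(1,2) 1(1) by simp
  obtain P' Q' S' T' where 2: "Z1 = Seq P' Q'" "Z2 = Seq S' T'"
    "trans (Seq (Ten P1 S) (Ten Q1 T)) (a1 @ a2) (b1 @ b2) (Seq (Ten P' S') (Ten Q' T'))"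
    using tIotaL.IH(2)[OF 1(1) cY tIotaL.prems(3,4)] by blast
  have "all_iota (a0 @ replicate n None)" "all_iota (b0 @ replicate v None)" using tIotaL.hyps(2,3) by simp_all
  from trans.tIotaL[OF 1(3) this] 2 1(2) show ?case by auto
next
  case (tIotaR X0 a1 b1 Y a0 b0 Z1)
  obtain P1 Q1 S1 T1 where 1: "Y = Seq P1 Q1" "Z2 = Seq S1 T1"
    "trans (Seq (Ten P S) (Ten Q T)) (a1 @ a2) (b1 @ b2) (Seq (Ten P1 S1) (Ten Q1 T1))"
    using tIotaR.IH(1)[OF tIotaR.prems] by blast
  have cY: "closed_sort (Seq P1 Q1) (k, m)" using sr[OF tIotaR.hyps(1)] tIotaR.prems(1,2) 1(1) by simp
  have cZ: "closed_sort (Seq S1 T1) (n, v)" using sr[OF tIotaR.prems(4,3)] 1(2) by simp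
  obtain P' Q' S' T' where 2: "Z1 = Seq P' Q'" "Seq S1 T1 = Seq S' T'"
    "trans (Seq (Ten P1 S1) (Ten Q1 T1)) (a0 @ replicate n None) (b0 @ replicate v None) (Seq (Ten P' S') (Ten Q' T'))"
    using tIotaR.IH(2)[OF 1(1) cY cZ trefl[OF cZ]] by blast
  have "all_iota (a0 @ replicate n None)" "all_iota (b0 @ replicate v None)" using tIotaR.hyps(3,4) by simp_all
  from trans.tIotaR[OF 1(3) 2(3) this] 2 1(2) show ?case by auto
next
  case (tCut P0 a1 c P' Q0 b1 Q')
  from tCut.prems(1) have e: "P0 = P" "Q0 = Q" by simp_all
  obtain l' where c: "closed_sort P (k, l')" "closed_sort Q (l', m)" using tCut.prems(2) by (auto simp: cs_Seq)
  obtain S' T' where "Z2 = Seq S' T'" "trans (Seq (Ten P S) (Ten Q T)) (a1 @ a2) (b1 @ b2) (Seq (Ten P' S') (Ten Q' T'))"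
    using interB2[OF tCut.prems(4) refl tCut.prems(3) c] tCut.hyps e by blast
  then show ?case by blast
qed simp_all



definition idset :: "nat \<Rightarrow> 'a trm set" where
  "idset k = {Wire [0..<k] [0..<k] (k, k), WireU [0..<k] [0..<k] (k, k)}"

definition twset :: "nat \<Rightarrow> nat \<Rightarrow> 'a trm set" where
  "twset k l = {Wire ([0..<k] @ [k..<k + l]) ([k..<k + l] @ [0..<k]) (k + l, l + k),
                WireU ([0..<k] @ [k..<k + l]) ([k..<k + l] @ [0..<k]) (k + l, l + k)}"

lemma Id_in: "Id_k k \<in> idset k" unfolding idset_def Id_Wire by simp
lemma Tw_in: "Tw k l \<in> twset k l" unfolding twset_def Tw_Wire by simp

lemma cs_idset: "J \<in> idset k \<Longrightarrow> closed_sort J (k, k)"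
  unfolding idset_def using cs_Wire[of "(k, k)" "[0..<k]" "[0..<k]"] cs_WireU[of "(k, k)" "[0..<k]" "[0..<k]"] by auto

lemma cs_twset: "W \<in> twset k l \<Longrightarrow> closed_sort W (k + l, l + k)"
  unfolding twset_def
  using cs_Wire[of "(k + l, l + k)" "[0..<k] @ [k..<k + l]" "[k..<k + l] @ [0..<k]"]
        cs_WireU[of "(k + l, l + k)" "[0..<k] @ [k..<k + l]" "[k..<k + l] @ [0..<k]"] by auto

lemma id_inv: "trans J a b J' \<Longrightarrow> J \<in> idset k \<Longrightarrow> J' \<in> idset k \<and> b = a \<and> length a = k"
proof -
  assume t: "trans J a b J'" and J: "J \<in> idset k"
  have "(J' = Wire [0..<k] [0..<k] (k, k) \<or> J' = WireU [0..<k] [0..<k] (k, k)) \<and> (\<exists>s. a = map s [0..<k] \<and> b = map s [0..<k])"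
    by (rule wire_inv[OF t]) (use J in \<open>auto simp: idset_def\<close>)
  then show ?thesis unfolding idset_def by auto
qed

lemma id_step: "J \<in> idset k \<Longrightarrow> length a = k \<Longrightarrow> trans J a a (Id_k k)"
proof -
  assume J: "J \<in> idset k" and a: "length a = k"
  obtain s where s: "map s [0..<k] = a" using ex_map_upt[OF a] by blast
  show ?thesis using J wire_step[of "[0..<k]" "[0..<k]" "(k, k)" s] wireU_step[of "[0..<k]" "[0..<k]" "(k, k)" s]
    unfolding idset_def Id_Wire s by auto
qed

lemma tw_inv: "trans W a b W' \<Longrightarrow> W \<in> twset k l \<Longrightarrow> W' \<in> twset k l \<and> length a = k + l \<and> b = drop k a @ take k a"
proof -
  assume t: "trans W a b W'" and W: "W \<in> twset k l"
  have "(W' = Wire ([0..<k] @ [k..<k + l]) ([k..<k + l] @ [0..<k]) (k + l, l + k) \<or> W' = WireU ([0..<k] @ [k..<k + l]) ([k..<k + l] @ [0..<k]) (k + l, l + k))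
     \<and> (\<exists>s. a = map s ([0..<k] @ [k..<k + l]) \<and> b = map s ([k..<k + l] @ [0..<k]))"
    by (rule wire_inv[OF t]) (use W in \<open>auto simp: twset_def\<close>)
  then obtain s where W': "W' \<in> twset k l" and s: "a = map s ([0..<k] @ [k..<k + l])" "b = map s ([k..<k + l] @ [0..<k])"
    unfolding twset_def by blast
  have "b = drop k a @ take k a" unfolding s by simp
  moreover have "length a = k + l" unfolding s by simp
  ultimately show ?thesis using W' by blast
qed

lemma tw_step: "W \<in> twset k l \<Longrightarrow> length a = k + l \<Longrightarrow> trans W a (drop k a @ take k a) (Tw k l)"
proof -
  assume W: "W \<in> twset k l" and a: "length a = k + l"
  obtain s where s: "map s [0..<k + l] = a" using ex_map_upt[OF a] by blast
  then have s': "map s ([0..<k] @ [k..<k + l]) = a" by (simp only: upt_split)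
  have "map s ([k..<k + l] @ [0..<k]) = drop k a @ take k a" unfolding s'[symmetric] by simp
  then show ?thesis using W wire_step[of "[0..<k] @ [k..<k + l]" "[k..<k + l] @ [0..<k]" "(k + l, l + k)" s]
     wireU_step[of "[0..<k] @ [k..<k + l]" "[k..<k + l] @ [0..<k]" "(k + l, l + k)" s]
    unfolding twset_def Tw_Wire s' by auto
qed



lemma bisim_conv: "is_bisim Rel \<Longrightarrow> is_bisim (converse Rel)"
  unfolding is_bisim_def by fast

lemma stepT_cases:
  assumes "stepT X a b X'"
  obtains (refl) k l where "closed_sort X (k, l)" "a = replicate k None" "b = replicate l None" "X' = X"
  | (seq) P R c Q S where "X = Seq P R" "X' = Seq Q S" "trans P a c Q" "trans R c b S"
  | (ten) P R Q S a1 a2 b1 b2 where "X = Ten P R" "X' = Ten Q S" "a = a1 @ a2" "b = b1 @ b2"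
         "trans P a1 b1 Q" "trans R a2 b2 S"
  using assms unfolding stepT_def by blast

lemma lawIdR:
  assumes cP: "closed_sort P (k, l)"
  shows "Seq P (Id_k l) \<approx> P"
proof -
  define Rel :: "('a trm \<times> 'a trm) set" where "Rel = {(Seq P J, P) | P J. closed_sort P (k, l) \<and> J \<in> idset l}"
  have sortX: "closed_sort (Seq P J) (k, l)" if "closed_sort P (k, l)" "J \<in> idset l" for P J :: "'a trm"
    using that cs_idset[OF that(2)] by (auto simp: cs_Seq)
  have fw: "\<exists>Y'. trans Y a b Y' \<and> (X', Y') \<in> Rel" if "(X, Y) \<in> Rel" "trans X a b X'" for X Y a b X'
  proof (rule gen[OF _ _ that(2,1)])
    fix X Y assume "(X, Y) \<in> Rel" then show "\<exists>P R. X = Seq P R \<or> X = Ten P R" unfolding Rel_def by blast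
  next
    fix X Y a b X' assume r: "(X, Y) \<in> Rel" and st: "stepT X a b X'"
    from r obtain P J where e: "X = Seq P J" "Y = P" and c: "closed_sort P (k, l)" "J \<in> idset l"
      unfolding Rel_def by blast
    from st show "\<exists>Y'. trans Y a b Y' \<and> (X', Y') \<in> Rel"
    proof (cases rule: stepT_cases)
      case (refl k0 l0)
      have "(k0, l0) = (k, l)" using refl(1) sortX[OF c] e(1) cs_unique by blast
      then have "trans Y a b Y" using trefl[OF c(1)] refl e by simp
      moreover have "(X', Y) \<in> Rel" using refl(4) r by simp
      ultimately show ?thesis by blast
    next
      case (seq P0 R0 c0 Q S)
      have e2: "P0 = P" "R0 = J" using seq(1) e(1) by simp_all
      have "S \<in> idset l \<and> b = c0 \<and> length c0 = l" using id_inv[OF seq(4)] e2 c(2) by simp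
      moreover have "closed_sort Q (k, l)" using sr[OF seq(3)] e2 c(1) by simp
      ultimately show ?thesis using seq(2,3) e2 e(2) unfolding Rel_def by blast
    next
      case (ten) then show ?thesis using e(1) by simp
    qed
  qed
  have bw: "\<exists>X'. trans X a b X' \<and> (X', Y') \<in> Rel" if "(X, Y) \<in> Rel" "trans Y a b Y'" for X Y a b Y'
  proof -
    from that(1) obtain P J where e: "X = Seq P J" "Y = P" and c: "closed_sort P (k, l)" "J \<in> idset l"
      unfolding Rel_def by blast
    have t: "trans P a b Y'" using that(2) e(2) by simp
    have "length b = l" "closed_sort Y' (k, l)" using sr[OF t c(1)] by simp_all
    then have "trans (Seq P J) a b (Seq Y' (Id_k l))" using trans.tCut[OF t id_step[OF c(2)]] by simp
    moreover have "(Seq Y' (Id_k l), Y') \<in> Rel" unfolding Rel_def using \<open>closed_sort Y' (k, l)\<close> Id_in by blast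
    ultimately show ?thesis using e(1) by blast
  qed
  have "is_bisim Rel" by (rule bisimI[OF fw bw])
  moreover have "(Seq P (Id_k l), P) \<in> Rel" unfolding Rel_def using cP Id_in by blast
  moreover have "closed_sort (Seq P (Id_k l)) (k, l)" using sortX[OF cP Id_in] .
  ultimately show ?thesis unfolding bisimilar_def using cP by blast
qed

lemma lawIdL:
  assumes cP: "closed_sort P (k, l)"
  shows "P \<approx> Seq (Id_k k) P"
proof -
  define Rel :: "('a trm \<times> 'a trm) set" where "Rel = {(Seq J P, P) | P J. closed_sort P (k, l) \<and> J \<in> idset k}"
  have sortX: "closed_sort (Seq J P) (k, l)" if "closed_sort P (k, l)" "J \<in> idset k" for P J :: "'a trm"
    using that cs_idset[OF that(2)] by (auto simp: cs_Seq)
  have fw: "\<exists>Y'. trans Y a b Y' \<and> (X', Y') \<in> Rel" if "(X, Y) \<in> Rel" "trans X a b X'" for X Y a b X'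
  proof (rule gen[OF _ _ that(2,1)])
    fix X Y assume "(X, Y) \<in> Rel" then show "\<exists>P R. X = Seq P R \<or> X = Ten P R" unfolding Rel_def by blast
  next
    fix X Y a b X' assume r: "(X, Y) \<in> Rel" and st: "stepT X a b X'"
    from r obtain P J where e: "X = Seq J P" "Y = P" and c: "closed_sort P (k, l)" "J \<in> idset k"
      unfolding Rel_def by blast
    from st show "\<exists>Y'. trans Y a b Y' \<and> (X', Y') \<in> Rel"
    proof (cases rule: stepT_cases)
      case (refl k0 l0)
      have "(k0, l0) = (k, l)" using refl(1) sortX[OF c] e(1) cs_unique by blast
      then have "trans Y a b Y" using trefl[OF c(1)] refl e by simp
      moreover have "(X', Y) \<in> Rel" using refl(4) r by simp
      ultimately show ?thesis by blast
    next
      case (seq P0 R0 c0 Q S)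
      have e2: "P0 = J" "R0 = P" using seq(1) e(1) by simp_all
      have "Q \<in> idset k \<and> c0 = a" using id_inv[OF seq(3)] e2 c(2) by simp
      moreover have "closed_sort S (k, l)" using sr[OF seq(4)] e2 c(1) by simp
      ultimately show ?thesis using seq(2,4) e2 e(2) unfolding Rel_def by blast
    next
      case (ten) then show ?thesis using e(1) by simp
    qed
  qed
  have bw: "\<exists>X'. trans X a b X' \<and> (X', Y') \<in> Rel" if "(X, Y) \<in> Rel" "trans Y a b Y'" for X Y a b Y'
  proof -
    from that(1) obtain P J where e: "X = Seq J P" "Y = P" and c: "closed_sort P (k, l)" "J \<in> idset k"
      unfolding Rel_def by blast
    have t: "trans P a b Y'" using that(2) e(2) by simp
    have "length a = k" "closed_sort Y' (k, l)" using sr[OF t c(1)] by simp_all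
    then have "trans (Seq J P) a b (Seq (Id_k k) Y')" using trans.tCut[OF id_step[OF c(2)] t] by simp
    moreover have "(Seq (Id_k k) Y', Y') \<in> Rel" unfolding Rel_def using \<open>closed_sort Y' (k, l)\<close> Id_in by blast
    ultimately show ?thesis using e(1) by blast
  qed
  have "is_bisim (converse Rel)" by (rule bisim_conv[OF bisimI[OF fw bw]])
  moreover have "(P, Seq (Id_k k) P) \<in> converse Rel" unfolding Rel_def using cP Id_in by blast
  moreover have "closed_sort (Seq (Id_k k) P) (k, l)" using sortX[OF cP Id_in] .
  ultimately show ?thesis unfolding bisimilar_def using cP by blast
qed

lemma lawTwTw: "Seq (Tw k l) (Tw l k) \<approx> (Id_k (k + l) :: 'a trm)"
proof -
  define Rel :: "('a trm \<times> 'a trm) set" where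
    "Rel = {(Seq W1 W2, J) | W1 W2 J. W1 \<in> twset k l \<and> W2 \<in> twset l k \<and> J \<in> idset (k + l)}"
  have sortX: "closed_sort (Seq W1 W2) (k + l, k + l)" if "W1 \<in> twset k l" "W2 \<in> twset l k" for W1 W2 :: "'a trm"
    using cs_twset[OF that(1)] cs_twset[OF that(2)] by (auto simp: cs_Seq)
  have fw: "\<exists>Y'. trans Y a b Y' \<and> (X', Y') \<in> Rel" if "(X, Y) \<in> Rel" "trans X a b X'" for X Y a b X'
  proof (rule gen[OF _ _ that(2,1)])
    fix X Y assume "(X, Y) \<in> Rel" then show "\<exists>P R. X = Seq P R \<or> X = Ten P R" unfolding Rel_def by blast
  next
    fix X Y a b X' assume r: "(X, Y) \<in> Rel" and st: "stepT X a b X'"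
    from r obtain W1 W2 J where e: "X = Seq W1 W2" "Y = J" and c: "W1 \<in> twset k l" "W2 \<in> twset l k" "J \<in> idset (k + l)"
      unfolding Rel_def by blast
    from st show "\<exists>Y'. trans Y a b Y' \<and> (X', Y') \<in> Rel"
    proof (cases rule: stepT_cases)
      case (refl k0 l0)
      have "(k0, l0) = (k + l, k + l)" using refl(1) sortX[OF c(1,2)] e(1) cs_unique by blast
      then have "trans Y a b Y" using trefl[OF cs_idset[OF c(3)]] refl e by simp
      moreover have "(X', Y) \<in> Rel" using refl(4) r by simp
      ultimately show ?thesis by blast
    next
      case (seq P0 R0 c0 Q S)
      have e2: "P0 = W1" "R0 = W2" using seq(1) e(1) by simp_all
      have 1: "Q \<in> twset k l" "length a = k + l" "c0 = drop k a @ take k a" using tw_inv[OF seq(3)] e2 c(1) by simp_all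
      have 2: "S \<in> twset l k" "b = drop l c0 @ take l c0" using tw_inv[OF seq(4)] e2 c(2) by simp_all
      have "b = a" using 1(2,3) 2(2) by simp
      then have "trans Y a b (Id_k (k + l))" using id_step[OF c(3) 1(2)] e(2) by simp
      moreover have "(X', Id_k (k + l)) \<in> Rel" unfolding Rel_def using seq(2) 1(1) 2(1) Id_in by blast
      ultimately show ?thesis by blast
    next
      case (ten) then show ?thesis using e(1) by simp
    qed
  qed
  have bw: "\<exists>X'. trans X a b X' \<and> (X', Y') \<in> Rel" if "(X, Y) \<in> Rel" "trans Y a b Y'" for X Y a b Y'
  proof -
    from that(1) obtain W1 W2 J where e: "X = Seq W1 W2" "Y = J" and c: "W1 \<in> twset k l" "W2 \<in> twset l k" "J \<in> idset (k + l)"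
      unfolding Rel_def by blast
    have 1: "Y' \<in> idset (k + l)" "b = a" "length a = k + l" using id_inv[OF that(2)] e(2) c(3) by simp_all
    have t1: "trans W1 a (drop k a @ take k a) (Tw k l)" by (rule tw_step[OF c(1) 1(3)])
    have len: "length (drop k a @ take k a) = l + k" using 1(3) by simp
    have t2: "trans W2 (drop k a @ take k a) a (Tw l k)" using tw_step[OF c(2) len] 1(3) by simp
    have "trans X a b (Seq (Tw k l) (Tw l k))" using trans.tCut[OF t1 t2] e(1) 1(2) by simp
    moreover have "(Seq (Tw k l) (Tw l k), Y') \<in> Rel" unfolding Rel_def using Tw_in 1(1) by blast
    ultimately show ?thesis by blast
  qed
  have "is_bisim Rel" by (rule bisimI[OF fw bw])
  moreover have "(Seq (Tw k l) (Tw l k), Id_k (k + l)) \<in> Rel" unfolding Rel_def using Tw_in Id_in by blast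
  moreover have "closed_sort (Seq (Tw k l) (Tw l k) :: 'a trm) (k + l, k + l)" using sortX[OF Tw_in Tw_in] .
  moreover have "closed_sort (Id_k (k + l) :: 'a trm) (k + l, k + l)" using cs_idset[OF Id_in] .
  ultimately show ?thesis unfolding bisimilar_def by blast
qed



lemma cs_SeqI: "closed_sort P (k, n) \<Longrightarrow> closed_sort R (n, l) \<Longrightarrow> closed_sort (Seq P R) (k, l)"
  by (auto simp: cs_Seq)

lemma cs_TenI: "closed_sort P (k, l) \<Longrightarrow> closed_sort R (m, n) \<Longrightarrow> closed_sort (Ten P R) (k + m, l + n)"
  unfolding cs_Ten by blast

lemma bisim_gen2:
  assumes dom1: "\<And>X Y. (X, Y) \<in> Rel \<Longrightarrow> (\<exists>P R. X = Seq P R \<or> X = Ten P R)"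
    and H1: "\<And>X Y a b X'. (X, Y) \<in> Rel \<Longrightarrow> stepT X a b X' \<Longrightarrow> \<exists>Y'. trans Y a b Y' \<and> (X', Y') \<in> Rel"
    and dom2: "\<And>X Y. (X, Y) \<in> Rel \<Longrightarrow> (\<exists>P R. Y = Seq P R \<or> Y = Ten P R)"
    and H2: "\<And>X Y a b Y'. (X, Y) \<in> Rel \<Longrightarrow> stepT Y a b Y' \<Longrightarrow> \<exists>X'. trans X a b X' \<and> (X', Y') \<in> Rel"
  shows "is_bisim Rel"
proof (rule bisimI)
  fix X Y a b X' assume "(X, Y) \<in> Rel" "trans X a b X'"
  then show "\<exists>Y'. trans Y a b Y' \<and> (X', Y') \<in> Rel"
    apply -
    apply (rule gen[where Rel=Rel and X=X and Y=Y])
       apply (erule dom1)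
      apply (erule (1) H1)
     apply assumption+
    done
next
  fix X Y a b Y' assume r: "(X, Y) \<in> Rel" and t: "trans Y a b Y'"
  have d: "\<exists>P R. Y = Seq P R \<or> Y = Ten P R" if "(Y, X) \<in> converse Rel" for X Y using dom2 that by blast
  have h: "\<exists>X'. trans X a b X' \<and> (Y', X') \<in> converse Rel" if "(Y, X) \<in> converse Rel" "stepT Y a b Y'" for X Y a b Y'
    using H2 that by blast
  have r': "(Y, X) \<in> converse Rel" using r by simp
  have "\<exists>X'. trans X a b X' \<and> (Y', X') \<in> converse Rel"
    apply (rule gen[where Rel="converse Rel" and X=Y and Y=X])
       apply (erule d)
      apply (erule (1) h)
     apply (rule t)
    apply (rule r')
    done
  then show "\<exists>X'. trans X a b X' \<and> (X', Y') \<in> Rel" by blast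
qed

lemma lawAssoc:
  assumes cP: "closed_sort P (k, l)" and cQ: "closed_sort Q (l, m)" and cR: "closed_sort R (m, n)"
  shows "Seq (Seq P Q) R \<approx> Seq P (Seq Q R)"
proof -
  define Rel :: "('a trm \<times> 'a trm) set" where
    "Rel = {(Seq (Seq P Q) R, Seq P (Seq Q R)) | P Q R. \<exists>l m. closed_sort P (k, l) \<and> closed_sort Q (l, m) \<and> closed_sort R (m, n)}"
  have sorts: "closed_sort (Seq (Seq P Q) R) (k, n) \<and> closed_sort (Seq P (Seq Q R)) (k, n)"
    if "closed_sort P (k, l)" "closed_sort Q (l, m)" "closed_sort R (m, n)" for P Q R :: "'a trm" and l m
    using that by (auto simp: cs_Seq)
  have "is_bisim Rel"
  proof (rule bisim_gen2)
    fix X Y assume "(X, Y) \<in> Rel" then show "\<exists>P R. X = Seq P R \<or> X = Ten P R" unfolding Rel_def by blast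
  next
    fix X Y assume "(X, Y) \<in> Rel" then show "\<exists>P R. Y = Seq P R \<or> Y = Ten P R" unfolding Rel_def by blast
  next
    fix X Y a b X' assume r: "(X, Y) \<in> Rel" and st: "stepT X a b X'"
    from r obtain P Q R l m where e: "X = Seq (Seq P Q) R" "Y = Seq P (Seq Q R)"
      and c: "closed_sort P (k, l)" "closed_sort Q (l, m)" "closed_sort R (m, n)"
      unfolding Rel_def by blast
    from st show "\<exists>Y'. trans Y a b Y' \<and> (X', Y') \<in> Rel"
    proof (cases rule: stepT_cases)
      case (refl k0 l0)
      have "(k0, l0) = (k, n)" using refl(1) sorts[OF c] e(1) cs_unique by blast
      then have "trans Y a b Y" using trefl[of Y k n] sorts[OF c] refl e by simp
      moreover have "(X', Y) \<in> Rel" using refl(4) r by simp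
      ultimately show ?thesis by blast
    next
      case (seq P0 R0 c0 Q0 S)
      have e2: "P0 = Seq P Q" "R0 = R" using seq(1) e(1) by simp_all
      have cPQ: "closed_sort (Seq P Q) (k, m)" using c by (auto simp: cs_Seq)
      obtain P' Q' where 1: "Q0 = Seq P' Q'" "trans (Seq P (Seq Q R)) a b (Seq P' (Seq Q' S))"
        using assocA[OF seq(3) e2(1) cPQ c(3)] seq(4) e2(2) by blast
      have "closed_sort (Seq P' Q') (k, m)" using sr[OF seq(3)] e2 cPQ 1(1) by simp
      then obtain l' where c1: "closed_sort P' (k, l')" "closed_sort Q' (l', m)" by (auto simp: cs_Seq)
      have "closed_sort S (m, n)" using sr[OF seq(4)] e2 c(3) by simp
      then have "(X', Seq P' (Seq Q' S)) \<in> Rel" unfolding Rel_def using seq(2) 1(1) c1 by blast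
      then show ?thesis using 1(2) e(2) by blast
    next
      case (ten) then show ?thesis using e(1) by simp
    qed
  next
    fix X Y a b Y' assume r: "(X, Y) \<in> Rel" and st: "stepT Y a b Y'"
    from r obtain P Q R l m where e: "X = Seq (Seq P Q) R" "Y = Seq P (Seq Q R)"
      and c: "closed_sort P (k, l)" "closed_sort Q (l, m)" "closed_sort R (m, n)"
      unfolding Rel_def by blast
    from st show "\<exists>X'. trans X a b X' \<and> (X', Y') \<in> Rel"
    proof (cases rule: stepT_cases)
      case (refl k0 l0)
      have "(k0, l0) = (k, n)" using refl(1) sorts[OF c] e(2) cs_unique by blast
      then have "trans X a b X" using trefl[of X k n] sorts[OF c] refl e by simp
      moreover have "(X, Y') \<in> Rel" using refl(4) r by simp
      ultimately show ?thesis by blast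
    next
      case (seq P0 R0 c0 Q0 S)
      have e2: "P0 = P" "R0 = Seq Q R" using seq(1) e(2) by simp_all
      have cQR: "closed_sort (Seq Q R) (l, n)" using c by (auto simp: cs_Seq)
      obtain Q' R' where 1: "S = Seq Q' R'" "trans (Seq (Seq P Q) R) a b (Seq (Seq Q0 Q') R')"
        using assocB[OF seq(4) e2(2) c(1) cQR] seq(3) e2(1) by blast
      have "closed_sort (Seq Q' R') (l, n)" using sr[OF seq(4)] e2 cQR 1(1) by simp
      then obtain m' where c1: "closed_sort Q' (l, m')" "closed_sort R' (m', n)" by (auto simp: cs_Seq)
      have "closed_sort Q0 (k, l)" using sr[OF seq(3)] e2 c(1) by simp
      then have "(Seq (Seq Q0 Q') R', Y') \<in> Rel" unfolding Rel_def using seq(2) 1(1) c1 by blast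
      then show ?thesis using 1(2) e(1) by blast
    next
      case (ten) then show ?thesis using e(2) by simp
    qed
  qed
  moreover have "(Seq (Seq P Q) R, Seq P (Seq Q R)) \<in> Rel" unfolding Rel_def using cP cQ cR by blast
  ultimately show ?thesis unfolding bisimilar_def using sorts[OF cP cQ cR] by blast
qed

lemma lawTenAssoc:
  assumes cP: "closed_sort P (k, l)" and cR: "closed_sort R (m, n)" and cT: "closed_sort T (u, v)"
  shows "Ten (Ten P R) T \<approx> Ten P (Ten R T)"
proof -
  define Rel :: "('a trm \<times> 'a trm) set" where
    "Rel = {(Ten (Ten P R) T, Ten P (Ten R T)) | P R T. closed_sort P (k, l) \<and> closed_sort R (m, n) \<and> closed_sort T (u, v)}"
  have sorts: "closed_sort (Ten (Ten P R) T) (k + m + u, l + n + v) \<and> closed_sort (Ten P (Ten R T)) (k + m + u, l + n + v)"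
    if "closed_sort P (k, l)" "closed_sort R (m, n)" "closed_sort T (u, v)" for P R T :: "'a trm"
  proof -
    have "closed_sort (Ten P (Ten R T)) (k + (m + u), l + (n + v))" using cs_TenI[OF that(1) cs_TenI[OF that(2,3)]] .
    moreover have "closed_sort (Ten (Ten P R) T) (k + m + u, l + n + v)" using cs_TenI[OF cs_TenI[OF that(1,2)] that(3)] .
    ultimately show ?thesis by (simp add: add.assoc)
  qed
  have "is_bisim Rel"
  proof (rule bisim_gen2)
    fix X Y assume "(X, Y) \<in> Rel" then show "\<exists>P R. X = Seq P R \<or> X = Ten P R" unfolding Rel_def by blast
  next
    fix X Y assume "(X, Y) \<in> Rel" then show "\<exists>P R. Y = Seq P R \<or> Y = Ten P R" unfolding Rel_def by blast
  next
    fix X Y a b X' assume r: "(X, Y) \<in> Rel" and st: "stepT X a b X'"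
    from r obtain P R T where e: "X = Ten (Ten P R) T" "Y = Ten P (Ten R T)"
      and c: "closed_sort P (k, l)" "closed_sort R (m, n)" "closed_sort T (u, v)"
      unfolding Rel_def by blast
    from st show "\<exists>Y'. trans Y a b Y' \<and> (X', Y') \<in> Rel"
    proof (cases rule: stepT_cases)
      case (refl k0 l0)
      have "(k0, l0) = (k + m + u, l + n + v)" using refl(1) sorts[OF c] e(1) cs_unique by blast
      then have "trans Y a b Y" using trefl[of Y "k + m + u" "l + n + v"] sorts[OF c] refl e by simp
      moreover have "(X', Y) \<in> Rel" using refl(4) r by simp
      ultimately show ?thesis by blast
    next
      case (seq) then show ?thesis using e(1) by simp
    next
      case (ten P0 R0 Q0 S a1 a2 b1 b2)
      have e2: "P0 = Ten P R" "R0 = T" using ten(1) e(1) by simp_all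
      obtain a11 a12 b11 b12 P' R' where 1: "a1 = a11 @ a12" "b1 = b11 @ b12" "Q0 = Ten P' R'"
        "trans P a11 b11 P'" "trans R a12 b12 R'"
        using tenD[OF ten(5) e2(1) c(1,2)] by blast
      have t: "trans Y a b (Ten P' (Ten R' S))"
        using trans.tTen[OF 1(4) trans.tTen[OF 1(5) ten(6)]] e(2) e2(2) ten(3,4) 1(1,2) by simp
      have "closed_sort P' (k, l)" "closed_sort R' (m, n)" "closed_sort S (u, v)"
        using sr[OF 1(4) c(1)] sr[OF 1(5) c(2)] sr[OF ten(6)] e2(2) c(3) by simp_all
      then have "(X', Ten P' (Ten R' S)) \<in> Rel" unfolding Rel_def using ten(2) 1(3) by blast
      then show ?thesis using t by blast
    qed
  next
    fix X Y a b Y' assume r: "(X, Y) \<in> Rel" and st: "stepT Y a b Y'"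
    from r obtain P R T where e: "X = Ten (Ten P R) T" "Y = Ten P (Ten R T)"
      and c: "closed_sort P (k, l)" "closed_sort R (m, n)" "closed_sort T (u, v)"
      unfolding Rel_def by blast
    from st show "\<exists>X'. trans X a b X' \<and> (X', Y') \<in> Rel"
    proof (cases rule: stepT_cases)
      case (refl k0 l0)
      have "(k0, l0) = (k + m + u, l + n + v)" using refl(1) sorts[OF c] e(2) cs_unique by blast
      then have "trans X a b X" using trefl[of X "k + m + u" "l + n + v"] sorts[OF c] refl e by simp
      moreover have "(X, Y') \<in> Rel" using refl(4) r by simp
      ultimately show ?thesis by blast
    next
      case (seq) then show ?thesis using e(2) by simp
    next
      case (ten P0 R0 Q0 S a1 a2 b1 b2)
      have e2: "P0 = P" "R0 = Ten R T" using ten(1) e(2) by simp_all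
      obtain a21 a22 b21 b22 R' T' where 1: "a2 = a21 @ a22" "b2 = b21 @ b22" "S = Ten R' T'"
        "trans R a21 b21 R'" "trans T a22 b22 T'"
        using tenD[OF ten(6) e2(2) c(2,3)] by blast
      have t: "trans X a b (Ten (Ten Q0 R') T')"
        using trans.tTen[OF trans.tTen[OF ten(5) 1(4)] 1(5)] e(1) e2(1) ten(3,4) 1(1,2) by simp
      have "closed_sort Q0 (k, l)" "closed_sort R' (m, n)" "closed_sort T' (u, v)"
        using sr[OF ten(5)] e2(1) c(1) sr[OF 1(4) c(2)] sr[OF 1(5) c(3)] by simp_all
      then have "(Ten (Ten Q0 R') T', Y') \<in> Rel" unfolding Rel_def using ten(2) 1(3) by blast
      then show ?thesis using t by blast
    qed
  qed
  moreover have "(Ten (Ten P R) T, Ten P (Ten R T)) \<in> Rel" unfolding Rel_def using cP cR cT by blast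
  ultimately show ?thesis unfolding bisimilar_def using sorts[OF cP cR cT] by blast
qed

lemma lawInter:
  assumes cP: "closed_sort P (k, l)" and cQ: "closed_sort Q (l, m)" and cS: "closed_sort S (n, u)" and cT: "closed_sort T (u, v)"
  shows "Seq (Ten P S) (Ten Q T) \<approx> Ten (Seq P Q) (Seq S T)"
proof -
  define Rel :: "('a trm \<times> 'a trm) set" where
    "Rel = {(Seq (Ten P S) (Ten Q T), Ten (Seq P Q) (Seq S T)) | P Q S T. \<exists>l u. closed_sort P (k, l) \<and> closed_sort Q (l, m)
       \<and> closed_sort S (n, u) \<and> closed_sort T (u, v)}"
  have sorts: "closed_sort (Seq (Ten P S) (Ten Q T)) (k + n, m + v) \<and> closed_sort (Ten (Seq P Q) (Seq S T)) (k + n, m + v)"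
    if "closed_sort P (k, l)" "closed_sort Q (l, m)" "closed_sort S (n, u)" "closed_sort T (u, v)" for P Q S T :: "'a trm" and l u
  proof -
    show ?thesis using cs_SeqI[OF cs_TenI[OF that(1,3)] cs_TenI[OF that(2,4)]] cs_TenI[OF cs_SeqI[OF that(1,2)] cs_SeqI[OF that(3,4)]] by blast
  qed
  have "is_bisim Rel"
  proof (rule bisim_gen2)
    fix X Y assume "(X, Y) \<in> Rel" then show "\<exists>P R. X = Seq P R \<or> X = Ten P R" unfolding Rel_def by blast
  next
    fix X Y assume "(X, Y) \<in> Rel" then show "\<exists>P R. Y = Seq P R \<or> Y = Ten P R" unfolding Rel_def by blast
  next
    fix X Y a b X' assume r: "(X, Y) \<in> Rel" and st: "stepT X a b X'"
    from r obtain P Q S T l u where e: "X = Seq (Ten P S) (Ten Q T)" "Y = Ten (Seq P Q) (Seq S T)"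
      and c: "closed_sort P (k, l)" "closed_sort Q (l, m)" "closed_sort S (n, u)" "closed_sort T (u, v)"
      unfolding Rel_def by blast
    from st show "\<exists>Y'. trans Y a b Y' \<and> (X', Y') \<in> Rel"
    proof (cases rule: stepT_cases)
      case (refl k0 l0)
      have "(k0, l0) = (k + n, m + v)" using refl(1) sorts[OF c] e(1) cs_unique by blast
      then have "trans Y a b Y" using trefl[of Y "k + n" "m + v"] sorts[OF c] refl e by simp
      moreover have "(X', Y) \<in> Rel" using refl(4) r by simp
      ultimately show ?thesis by blast
    next
      case (seq P0 R0 c0 Q0 S0)
      have e2: "P0 = Ten P S" "R0 = Ten Q T" using seq(1) e(1) by simp_all
      obtain a1 a2 c1 c2 P' S' where 1: "a = a1 @ a2" "c0 = c1 @ c2" "Q0 = Ten P' S'"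
        "trans P a1 c1 P'" "trans S a2 c2 S'"
        using tenD[OF seq(3) e2(1) c(1,3)] by blast
      obtain d1 d2 b1 b2 Q' T' where 2: "c0 = d1 @ d2" "b = b1 @ b2" "S0 = Ten Q' T'"
        "trans Q d1 b1 Q'" "trans T d2 b2 T'"
        using tenD[OF seq(4) e2(2) c(2,4)] by blast
      have l1: "length c1 = l" using sr[OF 1(4) c(1)] by simp
      have l2: "length d1 = l" using sr[OF 2(4) c(2)] by simp
      have "c1 = d1" "c2 = d2" using 1(2) 2(1) l1 l2 by simp_all
      then have q: "trans Q c1 b1 Q'" "trans T c2 b2 T'" using 2(4,5) by simp_all
      have t: "trans Y a b (Ten (Seq P' Q') (Seq S' T'))"
        using trans.tTen[OF trans.tCut[OF 1(4) q(1)] trans.tCut[OF 1(5) q(2)]] e(2) 1(1) 2(2) by simp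
      have "closed_sort P' (k, l)" "closed_sort Q' (l, m)" "closed_sort S' (n, u)" "closed_sort T' (u, v)"
        using sr[OF 1(4) c(1)] sr[OF 2(4) c(2)] sr[OF 1(5) c(3)] sr[OF 2(5) c(4)] by simp_all
      then have "(X', Ten (Seq P' Q') (Seq S' T')) \<in> Rel" unfolding Rel_def using seq(2) 1(3) 2(3) by blast
      then show ?thesis using t by blast
    next
      case (ten) then show ?thesis using e(1) by simp
    qed
  next
    fix X Y a b Y' assume r: "(X, Y) \<in> Rel" and st: "stepT Y a b Y'"
    from r obtain P Q S T l u where e: "X = Seq (Ten P S) (Ten Q T)" "Y = Ten (Seq P Q) (Seq S T)"
      and c: "closed_sort P (k, l)" "closed_sort Q (l, m)" "closed_sort S (n, u)" "closed_sort T (u, v)"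
      unfolding Rel_def by blast
    from st show "\<exists>X'. trans X a b X' \<and> (X', Y') \<in> Rel"
    proof (cases rule: stepT_cases)
      case (refl k0 l0)
      have "(k0, l0) = (k + n, m + v)" using refl(1) sorts[OF c] e(2) cs_unique by blast
      then have "trans X a b X" using trefl[of X "k + n" "m + v"] sorts[OF c] refl e by simp
      moreover have "(X, Y') \<in> Rel" using refl(4) r by simp
      ultimately show ?thesis by blast
    next
      case (seq) then show ?thesis using e(2) by simp
    next
      case (ten P0 R0 Q0 S0 a1 a2 b1 b2)
      have e2: "P0 = Seq P Q" "R0 = Seq S T" using ten(1) e(2) by simp_all
      have cPQ: "closed_sort (Seq P Q) (k, m)" and cST: "closed_sort (Seq S T) (n, v)"
        using c by (auto simp: cs_Seq)
      have tST: "trans (Seq S T) a2 b2 S0" using ten(6) e2(2) by simp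
      obtain P' Q' S' T' where 1: "Q0 = Seq P' Q'" "S0 = Seq S' T'"
        "trans (Seq (Ten P S) (Ten Q T)) (a1 @ a2) (b1 @ b2) (Seq (Ten P' S') (Ten Q' T'))"
        using interB1[OF ten(5) e2(1) cPQ cST tST] by blast
      have "closed_sort (Seq P' Q') (k, m)" using sr[OF ten(5)] e2(1) cPQ 1(1) by simp
      then obtain l' where c1: "closed_sort P' (k, l')" "closed_sort Q' (l', m)" by (auto simp: cs_Seq)
      have "closed_sort (Seq S' T') (n, v)" using sr[OF tST cST] 1(2) by simp
      then obtain u' where c2: "closed_sort S' (n, u')" "closed_sort T' (u', v)" by (auto simp: cs_Seq)
      have "(Seq (Ten P' S') (Ten Q' T'), Y') \<in> Rel" unfolding Rel_def using ten(2) 1(1,2) c1 c2 by blast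
      then show ?thesis using 1(3) e(1) ten(3,4) by blast
    qed
  qed
  moreover have "(Seq (Ten P S) (Ten Q T), Ten (Seq P Q) (Seq S T)) \<in> Rel" unfolding Rel_def using cP cQ cS cT by blast
  ultimately show ?thesis unfolding bisimilar_def using sorts[OF cP cQ cS cT] by blast
qed



lemma lawSwap:
  assumes cP: "closed_sort P (k, l)" and cR: "closed_sort R (m, n)"
  shows "Seq (Ten P R) (Tw l n) \<approx> Seq (Tw k m) (Ten R P)"
proof -
  define Rel :: "('a trm \<times> 'a trm) set" where
    "Rel = {(Seq (Ten P R) W1, Seq W2 (Ten R P)) | P R W1 W2. closed_sort P (k, l) \<and> closed_sort R (m, n)
       \<and> W1 \<in> twset l n \<and> W2 \<in> twset k m}"
  have sorts: "closed_sort (Seq (Ten P R) W1) (k + m, n + l) \<and> closed_sort (Seq W2 (Ten R P)) (k + m, n + l)"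
    if "closed_sort P (k, l)" "closed_sort R (m, n)" "W1 \<in> twset l n" "W2 \<in> twset k m" for P R W1 W2 :: "'a trm"
  proof -
    have "closed_sort (Seq (Ten P R) W1) (k + m, n + l)" using cs_SeqI[OF cs_TenI[OF that(1,2)] cs_twset[OF that(3)]] .
    moreover have "closed_sort (Seq W2 (Ten R P)) (k + m, n + l)" using cs_SeqI[OF cs_twset[OF that(4)] cs_TenI[OF that(2,1)]] .
    ultimately show ?thesis by blast
  qed
  have "is_bisim Rel"
  proof (rule bisim_gen2)
    fix X Y assume "(X, Y) \<in> Rel" then show "\<exists>P R. X = Seq P R \<or> X = Ten P R" unfolding Rel_def by blast
  next
    fix X Y assume "(X, Y) \<in> Rel" then show "\<exists>P R. Y = Seq P R \<or> Y = Ten P R" unfolding Rel_def by blast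
  next
    fix X Y a b X' assume r: "(X, Y) \<in> Rel" and st: "stepT X a b X'"
    from r obtain P R W1 W2 where e: "X = Seq (Ten P R) W1" "Y = Seq W2 (Ten R P)"
      and c: "closed_sort P (k, l)" "closed_sort R (m, n)" "W1 \<in> twset l n" "W2 \<in> twset k m"
      unfolding Rel_def by blast
    from st show "\<exists>Y'. trans Y a b Y' \<and> (X', Y') \<in> Rel"
    proof (cases rule: stepT_cases)
      case (refl k0 l0)
      have "(k0, l0) = (k + m, n + l)" using refl(1) sorts[OF c] e(1) cs_unique by blast
      then have "trans Y a b Y" using trefl[of Y "k + m" "n + l"] sorts[OF c] refl e by simp
      moreover have "(X', Y) \<in> Rel" using refl(4) r by simp
      ultimately show ?thesis by blast
    next
      case (seq P0 R0 c0 Q0 S0)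
      have e2: "P0 = Ten P R" "R0 = W1" using seq(1) e(1) by simp_all
      obtain a1 a2 c1 c2 P' R' where 1: "a = a1 @ a2" "c0 = c1 @ c2" "Q0 = Ten P' R'"
        "trans P a1 c1 P'" "trans R a2 c2 R'"
        using tenD[OF seq(3) e2(1) c(1,2)] by blast
      have s1: "closed_sort P' (k, l)" "length a1 = k" "length c1 = l" using sr[OF 1(4) c(1)] by simp_all
      have s2: "closed_sort R' (m, n)" "length a2 = m" "length c2 = n" using sr[OF 1(5) c(2)] by simp_all
      have w1: "S0 \<in> twset l n" "b = drop l c0 @ take l c0" using tw_inv[OF seq(4)] e2(2) c(3) by simp_all
      have b: "b = c2 @ c1" using w1(2) 1(2) s1(3) by simp
      have la: "length a = k + m" using 1(1) s1(2) s2(2) by simp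
      have ta: "drop k a @ take k a = a2 @ a1" using 1(1) s1(2) by simp
      have tw: "trans W2 a (a2 @ a1) (Tw k m)" using tw_step[OF c(4) la] ta by simp
      have t: "trans Y a b (Seq (Tw k m) (Ten R' P'))"
        using trans.tCut[OF tw trans.tTen[OF 1(5) 1(4)]] b e(2) by simp
      have "(X', Seq (Tw k m) (Ten R' P')) \<in> Rel" unfolding Rel_def using seq(2) 1(3) s1(1) s2(1) w1(1) Tw_in by blast
      then show ?thesis using t by blast
    next
      case (ten) then show ?thesis using e(1) by simp
    qed
  next
    fix X Y a b Y' assume r: "(X, Y) \<in> Rel" and st: "stepT Y a b Y'"
    from r obtain P R W1 W2 where e: "X = Seq (Ten P R) W1" "Y = Seq W2 (Ten R P)"
      and c: "closed_sort P (k, l)" "closed_sort R (m, n)" "W1 \<in> twset l n" "W2 \<in> twset k m"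
      unfolding Rel_def by blast
    from st show "\<exists>X'. trans X a b X' \<and> (X', Y') \<in> Rel"
    proof (cases rule: stepT_cases)
      case (refl k0 l0)
      have "(k0, l0) = (k + m, n + l)" using refl(1) sorts[OF c] e(2) cs_unique by blast
      then have "trans X a b X" using trefl[of X "k + m" "n + l"] sorts[OF c] refl e by simp
      moreover have "(X, Y') \<in> Rel" using refl(4) r by simp
      ultimately show ?thesis by blast
    next
      case (seq P0 R0 c0 Q0 S0)
      have e2: "P0 = W2" "R0 = Ten R P" using seq(1) e(2) by simp_all
      have w2: "Q0 \<in> twset k m" "length a = k + m" "c0 = drop k a @ take k a" using tw_inv[OF seq(3)] e2(1) c(4) by simp_all
      obtain c1 c2 b1 b2 R' P' where 1: "c0 = c1 @ c2" "b = b1 @ b2" "S0 = Ten R' P'"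
        "trans R c1 b1 R'" "trans P c2 b2 P'"
        using tenD[OF seq(4) e2(2) c(2,1)] by blast
      have s1: "closed_sort R' (m, n)" "length c1 = m" "length b1 = n" using sr[OF 1(4) c(2)] by simp_all
      have s2: "closed_sort P' (k, l)" "length b2 = l" using sr[OF 1(5) c(1)] by simp_all
      have "length (drop k a) = m" using w2(2) by simp
      then have cc: "c1 = drop k a" "c2 = take k a" using w2(3) 1(1) s1(2) by simp_all
      have lb: "length (b2 @ b1) = l + n" using s1(3) s2(2) by simp
      have tb: "drop l (b2 @ b1) @ take l (b2 @ b1) = b" using 1(2) s2(2) by simp
      have t0: "trans (Ten P R) a (b2 @ b1) (Ten P' R')" using trans.tTen[OF 1(5) 1(4)] cc by simp
      have t: "trans X a b (Seq (Ten P' R') (Tw l n))"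
        using trans.tCut[OF t0 tw_step[OF c(3) lb]] tb e(1) by simp
      have "(Seq (Ten P' R') (Tw l n), Y') \<in> Rel" unfolding Rel_def using seq(2) 1(3) s1(1) s2(1) w2(1) Tw_in by blast
      then show ?thesis using t by blast
    next
      case (ten) then show ?thesis using e(2) by simp
    qed
  qed
  moreover have "(Seq (Ten P R) (Tw l n), Seq (Tw k m) (Ten R P)) \<in> Rel" unfolding Rel_def using cP cR Tw_in by blast
  ultimately show ?thesis unfolding bisimilar_def using sorts[OF cP cR Tw_in Tw_in] by blast
qed

theorem mainTheorem3:
  fixes P Q R S T :: "'a trm" and k l m n u v :: nat
  assumes "closed_sort P (k, l)" and "closed_sort Q (l, m)" and "closed_sort R (m, n)"
    and "closed_sort S (n, u)" and "closed_sort T (u, v)"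
  shows "(Seq (Seq P Q) R \<approx> Seq P (Seq Q R))
    \<and> (Seq P (Id_k l) \<approx> P \<and> P \<approx> Seq (Id_k k) P)
    \<and> (Ten (Ten P R) T \<approx> Ten P (Ten R T))
    \<and> (Seq (Ten P S) (Ten Q T) \<approx> Ten (Seq P Q) (Seq S T))
    \<and> (Seq (Ten P R) (Tw l n) \<approx> Seq (Tw k m) (Ten R P))
    \<and> (Seq (Tw k l) (Tw l k) \<approx> (Id_k (k + l) :: 'a trm))"
  using lawAssoc[OF assms(1,2,3)] lawIdR[OF assms(1)] lawIdL[OF assms(1)]
    lawTenAssoc[OF assms(1,3,5)] lawInter[OF assms(1,2,4,5)] lawSwap[OF assms(1,3)] lawTwTw[of k l]
  by blast

end
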